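(* Let $H$ be the (complete) history of an execution of the SC-ABD algorithm (described in the context), let $H^{lt}$ be its logical-time history, let $x$ be a register, and let $o_1,o_2$ be operations in $H^{lt}|x$ such that $o_1$ contains an update phase and $o_2$ contains a query phase. If $o_1 <_{H^{lt}|x} o_2$, then $ts(o_1)\le ts(o_2)$.
   Context: System model: $n$ processes $p_1,\dots,p_n$, $\Pi=\{1,\dots,n\}$, asynchronous, reliable links, crash-stop failures, at most $f<n/2$ faulty processes. Registers hold integers, initially $0$; operations READ($r$), WRITE($r,v$); each process has at most one outstanding operation. A history is the sequence of invocation/response events ordered by real time; only complete histories are considered. $H|x$ is the subsequence of events of operations targeting register $x$. For operations $o_1,o_2$ in a sequence $G$ of events, $o_1<_G o_2$ means the response event of $o_1$ precedes the invocation event of $o_2$ in $G$. Algorithm SC-ABD (code for $p_i$). Local variables: logical clock $lt$ (initially $0$); request id $rid$ (initially $0$); map $tvps$ from registers to timestamp-value pairs, initially $((0,0),0)$; set $responses$ (initially empty); boolean $reading$; temporaries $rreg,rval$. Timestamps are pairs (integer, process id), compared lexicographically; timestamp-value pairs are compared by timestamp (then value). Every message carries the sender's current $lt$; "bcast $m$" means send $m$ to every $p_j$, $j\in\Pi$. Handlers: - READ($r$) invoked: $lt\gets lt+1$; $reading\gets true$; $rreg\gets r$; $rid\gets rid+1$; bcast ("query", $lt$, $rid$, $r$). - On ("query", $lt'$, $rid'$, $r$) from $p_j$: $lt\gets\max(lt,lt')+1$; send ("response", $lt$, $rid'$, $tvps[r]$) to $p_j$. - On ("response", $lt'$, $rid'$,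 $tsv'$) from $p_j$ with $rid=rid'$: $lt\gets\max(lt,lt')+1$; $responses\gets responses\cup\{(tsv',j)\}$; if $|responses|=\lfloor n/2\rfloor+1$: let $tsv=(ts,rval)$ be the received pair with maximal timestamp; $responses\gets\{\}$; $rid\gets rid+1$; bcast ("update", $lt$, $rid$, $rreg$, $tsv$). - WRITE($r,v$) invoked: $lt\gets lt+1$; $reading\gets false$; $tsv\gets((lt,i),v)$; $rid\gets rid+1$; bcast ("update", $lt$, $rid$, $r$, $tsv$). - On ("update", $lt'$, $rid'$, $r$, $tsv'$) from $p_j$: $lt\gets\max(lt,lt')+1$; $tvps[r]\gets\max(tvps[r],tsv')$; send ("ack", $lt$, $rid'$) to $p_j$. - On ("ack", $lt'$, $rid'$) from $p_j$ with $rid=rid'$: $lt\gets\max(lt,lt')+1$; $responses\gets responses\cup\{j\}$; if $|responses|=\lfloor n/2\rfloor+1$: $responses\gets\{\}$; $rid\gets rid+1$; if $reading$ return $rval$ else return OK. Phases: the query phase of a read is the broadcast of "query" messages and the collection of a majority of "response" messages; the update phase of an operation is the broadcast of "update" messages and the collection of a majority of "ack" messages. A write has only an update phase; a read has a query phase followed by an update phase. The timestamp $ts(o)$ of an operation $o$ is the timestamp in the pair broadcast in its update phase. Logical time: the logical time of a handler execution is the value assigned to $lt$ on its first line; the logical time of an invocation event is that of the invocation handler, and of a response event that of the handler that returns. The logical-time history $H^{lt}$ is the sequence of the events of $H$ reordered by their logical times, ties broken by the identifier of the process at which the event occurs. *)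

theory Defs
  imports Main "HOL-Library.Multiset" "HOL-Library.Product_Lexorder"
begin

text \<open>Processes are 1..n; registers are identified by naturals; values are integers.
Timestamps are pairs (integer clock, process id) compared lexicographically
(Product_Lexorder); timestamp-value pairs are compared by timestamp, then value.\<close>

type_synonym pid = nat
type_synonym reg = nat
type_synonym tstamp = "nat \<times> nat"
type_synonym tsv = "tstamp \<times> int"

datatype msg =
    Query nat nat reg          (* lt, rid, register *)
  | Response nat nat tsv       (* lt, rid, pair *)
  | Update nat nat reg tsv     (* lt, rid, register, pair *)
  | Ack nat nat                (* lt, rid *)

datatype opkind = Rd reg | Wr reg int
datatype result = RVal int | ROK

fun op_reg :: "opkind \<Rightarrow> reg" where
  "op_reg (Rd r) = r" | "op_reg (Wr r v) = r"

text \<open>History events: process, per-process operation number, operation,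
logical time of the event.\<close>
datatype event =
    EInv pid nat opkind nat
  | ERes pid nat opkind result nat

text \<open>Observations produced by steps: history events and (ghost) records of
the pair broadcast in the update phase of operation (p,k).\<close>
datatype obs = OEv event | OUpd pid nat tsv

record lstate =
  lt :: nat
  rid :: nat
  tvps :: "reg \<Rightarrow> tsv"
  qresps :: "(tsv \<times> pid) set"
  acks :: "pid set"
  reading :: bool
  rreg :: reg
  rval :: int
  busy :: bool                   (* ghost: an operation is outstanding *)
  opc :: nat                     (* ghost: number of invoked operations *)
  curop :: opkind                (* ghost: the outstanding operation *)

definition linit :: lstate where
  "linit = \<lparr> lt = 0, rid = 0, tvps = (\<lambda>_. ((0,0),0)), qresps = {}, acks = {},
            reading = False, rreg = 0, rval = 0, busy = False, opc = 0, curop = Rd 0 \<rparr>"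

record gstate =
  locals :: "pid \<Rightarrow> lstate"
  net :: "(pid \<times> pid \<times> msg) multiset"   (* (sender, receiver, message) in transit *)
  crashed :: "pid set"

definition ginit :: gstate where
  "ginit = \<lparr> locals = (\<lambda>_. linit), net = {#}, crashed = {} \<rparr>"

datatype input = Invoke pid opkind | Deliver pid pid msg | Crash pid

definition bcast :: "nat \<Rightarrow> pid \<Rightarrow> msg \<Rightarrow> (pid \<times> pid \<times> msg) multiset" where
  "bcast n i m = mset (map (\<lambda>k. (i, k, m)) [1..<n+1])"

definition maj :: "nat \<Rightarrow> nat" where
  "maj n = n div 2 + 1"

text \<open>Handler of a delivered message m from j at process i, in local state l.
Returns new local state, messages sent, observations.\<close>
fun handle :: "nat \<Rightarrow> pid \<Rightarrow> pid \<Rightarrow> msg \<Rightarrow> lstate \<Rightarrow>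
               lstate \<times> (pid \<times> pid \<times> msg) multiset \<times> obs list" where
  "handle n j i (Query lt' rid' r) l =
     (let t = max (lt l) lt' + 1 in
      (l\<lparr>lt := t\<rparr>, {# (i, j, Response t rid' (tvps l r)) #}, []))"
| "handle n j i (Response lt' rid' tsv') l =
     (if rid l = rid' then
        (let t = max (lt l) lt' + 1;
             R = qresps l \<union> {(tsv', j)} in
         if card R = maj n then
           (let tsv = Max (fst ` R) in
            (l\<lparr>lt := t, qresps := {}, rval := snd tsv, rid := rid l + 1\<rparr>,
             bcast n i (Update t (rid l + 1) (rreg l) tsv),
             [OUpd i (opc l) tsv]))
         else (l\<lparr>lt := t, qresps := R\<rparr>, {#}, []))
      else (l, {#}, []))"
| "handle n j i (Update lt' rid' r tsv') l =
     (let t = max (lt l) lt' + 1 in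
      (l\<lparr>lt := t, tvps := (tvps l)(r := max (tvps l r) tsv')\<rparr>,
       {# (i, j, Ack t rid') #}, []))"
| "handle n j i (Ack lt' rid') l =
     (if rid l = rid' then
        (let t = max (lt l) lt' + 1;
             A = acks l \<union> {j} in
         if card A = maj n then
           (l\<lparr>lt := t, acks := {}, rid := rid l + 1, busy := False\<rparr>, {#},
            [OEv (ERes i (opc l) (curop l) (if reading l then RVal (rval l) else ROK) t)])
         else (l\<lparr>lt := t, acks := A\<rparr>, {#}, []))
      else (l, {#}, []))"

fun invoke :: "nat \<Rightarrow> pid \<Rightarrow> opkind \<Rightarrow> lstate \<Rightarrow>
               lstate \<times> (pid \<times> pid \<times> msg) multiset \<times> obs list" where
  "invoke n i (Rd r) l =
     (let t = lt l + 1; k = opc l + 1 in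
      (l\<lparr>lt := t, reading := True, rreg := r, rid := rid l + 1,
         busy := True, opc := k, curop := Rd r\<rparr>,
       bcast n i (Query t (rid l + 1) r),
       [OEv (EInv i k (Rd r) t)]))"
| "invoke n i (Wr r v) l =
     (let t = lt l + 1; k = opc l + 1; tsv = ((t, i), v) in
      (l\<lparr>lt := t, reading := False, rid := rid l + 1,
         busy := True, opc := k, curop := Wr r v\<rparr>,
       bcast n i (Update t (rid l + 1) r tsv),
       [OEv (EInv i k (Wr r v) t), OUpd i k tsv]))"

text \<open>One step of the asynchronous system with n processes and at most f crashes.
None means the input is not enabled.\<close>
fun step :: "nat \<Rightarrow> nat \<Rightarrow> gstate \<Rightarrow> input \<Rightarrow> (gstate \<times> obs list) option" where
  "step n f s (Invoke i op) =
     (if i \<in> {1..n} \<and> i \<notin> crashed s \<and> \<not> busy (locals s i) then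
        (case invoke n i op (locals s i) of (l', ms, os) \<Rightarrow>
           Some (s\<lparr>locals := (locals s)(i := l'), net := net s + ms\<rparr>, os))
      else None)"
| "step n f s (Deliver j i m) =
     (if (j, i, m) \<in># net s \<and> i \<notin> crashed s then
        (case handle n j i m (locals s i) of (l', ms, os) \<Rightarrow>
           Some (s\<lparr>locals := (locals s)(i := l'),
                   net := (net s - {# (j, i, m) #}) + ms\<rparr>, os))
      else None)"
| "step n f s (Crash i) =
     (if i \<in> {1..n} \<and> i \<notin> crashed s \<and> card (crashed s) < f then
        Some (s\<lparr>crashed := crashed s \<union> {i}\<rparr>, [])
      else None)"

fun execs :: "nat \<Rightarrow> nat \<Rightarrow> gstate \<Rightarrow> input list \<Rightarrow> (gstate \<times> obs list) option" where
  "execs n f s [] = Some (s, [])"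
| "execs n f s (x # xs) =
     (case step n f s x of
        None \<Rightarrow> None
      | Some (s', os) \<Rightarrow>
          (case execs n f s' xs of
             None \<Rightarrow> None
           | Some (s'', os') \<Rightarrow> Some (s'', os @ os')))"

text \<open>The history H: events in real-time (step) order.\<close>
definition hist :: "obs list \<Rightarrow> event list" where
  "hist os = [e. OEv e \<leftarrow> os]"

fun ev_lt :: "event \<Rightarrow> nat" where
  "ev_lt (EInv p k op t) = t" | "ev_lt (ERes p k op r t) = t"
fun ev_proc :: "event \<Rightarrow> pid" where
  "ev_proc (EInv p k op t) = p" | "ev_proc (ERes p k op r t) = p"
fun ev_opkind :: "event \<Rightarrow> opkind" where
  "ev_opkind (EInv p k op t) = op" | "ev_opkind (ERes p k op r t) = op"
fun ev_opid :: "event \<Rightarrow> pid \<times> nat" where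
  "ev_opid (EInv p k op t) = (p, k)" | "ev_opid (ERes p k op r t) = (p, k)"

definition ev_reg :: "event \<Rightarrow> reg" where
  "ev_reg e = op_reg (ev_opkind e)"

fun is_inv_of :: "event \<Rightarrow> pid \<times> nat \<Rightarrow> bool" where
  "is_inv_of (EInv p k op t) op_id = ((p, k) = op_id)" | "is_inv_of (ERes p k op r t) op_id = False"
fun is_res_of :: "event \<Rightarrow> pid \<times> nat \<Rightarrow> bool" where
  "is_res_of (EInv p k op t) op_id = False" | "is_res_of (ERes p k op r t) op_id = ((p, k) = op_id)"

definition complete :: "event list \<Rightarrow> bool" where
  "complete H \<longleftrightarrow> (\<forall>e \<in> set H. \<forall>op_id. is_inv_of e op_id \<longrightarrow> (\<exists>e' \<in> set H. is_res_of e' op_id))"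

definition Hlt :: "event list \<Rightarrow> event list" where
  "Hlt H = sort_key (\<lambda>e. (ev_lt e, ev_proc e)) H"

definition restr :: "reg \<Rightarrow> event list \<Rightarrow> event list" where
  "restr x H = filter (\<lambda>e. ev_reg e = x) H"

definition op_in :: "event list \<Rightarrow> pid \<times> nat \<Rightarrow> bool" where
  "op_in G op_id \<longleftrightarrow> (\<exists>e \<in> set G. ev_opid e = op_id)"

definition prec :: "event list \<Rightarrow> pid \<times> nat \<Rightarrow> pid \<times> nat \<Rightarrow> bool" where
  "prec G o1 o2 \<longleftrightarrow> (\<exists>i j. i < j \<and> j < length G \<and> is_res_of (G ! i) o1 \<and> is_inv_of (G ! j) o2)"

definition has_update_phase :: "obs list \<Rightarrow> pid \<times> nat \<Rightarrow> bool" where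
  "has_update_phase os op_id \<longleftrightarrow> (\<exists>tsv. OUpd (fst op_id) (snd op_id) tsv \<in> set os)"

definition has_query_phase :: "event list \<Rightarrow> pid \<times> nat \<Rightarrow> bool" where
  "has_query_phase H op_id \<longleftrightarrow> (\<exists>e \<in> set H. is_inv_of e op_id \<and> (\<exists>r. ev_opkind e = Rd r))"

definition ts_of :: "obs list \<Rightarrow> pid \<times> nat \<Rightarrow> tstamp" where
  "ts_of os op_id = fst (THE tsv. OUpd (fst op_id) (snd op_id) tsv \<in> set os)"

end

theory Submission
  imports Defs
begin

datatype ghost = GU pid nat reg tsv | GQ pid nat reg tsv | GS pid nat reg tsv | GSQ pid nat reg nat

fun isQ :: "nat \<Rightarrow> msg \<Rightarrow> bool" where
  "isQ \<rho> (Query a b c) = (b = \<rho>)" | "isQ \<rho> _ = False"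
fun isR :: "nat \<Rightarrow> msg \<Rightarrow> bool" where
  "isR \<rho> (Response a b c) = (b = \<rho>)" | "isR \<rho> _ = False"

definition tok :: "(pid \<times> pid \<times> msg) multiset \<Rightarrow> (pid \<Rightarrow> lstate) \<Rightarrow> pid \<Rightarrow> pid \<Rightarrow> nat \<Rightarrow> nat" where
  "tok N L i j \<rho> = size (filter_mset (\<lambda>(a,b,m). a = i \<and> b = j \<and> isQ \<rho> m) N)
     + size (filter_mset (\<lambda>(a,b,m). a = j \<and> b = i \<and> isR \<rho> m) N)
     + (if \<rho> = rid (L i) \<and> j \<in> snd ` qresps (L i) then 1 else 0)"

definition qph :: "obs set \<Rightarrow> (pid \<Rightarrow> lstate) \<Rightarrow> pid \<Rightarrow> bool" where
  "qph Ob L i \<longleftrightarrow> busy (L i) \<and> \<not> (\<exists>tsv. OUpd i (opc (L i)) tsv \<in> Ob)"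
definition uph :: "obs set \<Rightarrow> (pid \<Rightarrow> lstate) \<Rightarrow> pid \<Rightarrow> bool" where
  "uph Ob L i \<longleftrightarrow> busy (L i) \<and> (\<exists>tsv. OUpd i (opc (L i)) tsv \<in> Ob)"

definition "c_mq n N G \<longleftrightarrow> (\<forall>a b bt \<rho> r. (a,b,Query bt \<rho> r) \<in># N \<longrightarrow> b \<in> {1..n} \<and> GSQ a \<rho> r bt \<in> G)"
definition "c_mu n N G \<longleftrightarrow> (\<forall>a b at \<rho> r tsv. (a,b,Update at \<rho> r tsv) \<in># N \<longrightarrow> b \<in> {1..n} \<and> GS a \<rho> r tsv \<in> G)"
definition "c_mr N G \<longleftrightarrow> (\<forall>a b q \<rho> v. (a,b,Response q \<rho> v) \<in># N \<longrightarrow> (\<exists>r bt. GQ a q r v \<in> G \<and> GSQ b \<rho> r bt \<in> G \<and> bt < q))"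
definition "c_ma N G \<longleftrightarrow> (\<forall>a b at \<rho>. (a,b,Ack at \<rho>) \<in># N \<longrightarrow> (\<exists>r tsv. GU a at r tsv \<in> G \<and> GS b \<rho> r tsv \<in> G))"
definition "c_gu n L G \<longleftrightarrow> (\<forall>p a r tsv. GU p a r tsv \<in> G \<longrightarrow> p \<in> {1..n} \<and> a \<le> lt (L p) \<and> tsv \<le> tvps (L p) r)"
definition "c_gq n L G \<longleftrightarrow> (\<forall>p q r v. GQ p q r v \<in> G \<longrightarrow> p \<in> {1..n} \<and> q \<le> lt (L p))"
definition "c_guq G \<longleftrightarrow> (\<forall>p a r tsv q v. GU p a r tsv \<in> G \<longrightarrow> GQ p q r v \<in> G \<longrightarrow> a < q \<longrightarrow> tsv \<le> v)"
definition "c_gs L G Ob \<longleftrightarrow> (\<forall>i \<rho> r tsv. GS i \<rho> r tsv \<in> G \<longrightarrow> \<rho> \<le> rid (L i) \<and> (\<rho> = rid (L i) \<longrightarrow>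
        uph Ob L i \<and> r = op_reg (curop (L i)) \<and> OUpd i (opc (L i)) tsv \<in> Ob))"
definition "c_gsq L G Ob \<longleftrightarrow> (\<forall>i \<rho> r bt. GSQ i \<rho> r bt \<in> G \<longrightarrow> \<rho> \<le> rid (L i) \<and> (\<rho> = rid (L i) \<longrightarrow>
        qph Ob L i \<and> curop (L i) = Rd r \<and> rreg (L i) = r \<and> OEv (EInv i (opc (L i)) (Rd r) bt) \<in> Ob))"
definition "c_acks L G Ob \<longleftrightarrow> (\<forall>i. (\<not> uph Ob L i \<longrightarrow> acks (L i) = {}) \<and>
        (\<forall>j\<in>acks (L i). \<exists>a tsv. a < lt (L i) \<and> OUpd i (opc (L i)) tsv \<in> Ob \<and> GU j a (op_reg (curop (L i))) tsv \<in> G))"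
definition "c_q L G Ob \<longleftrightarrow> (\<forall>i. (\<not> qph Ob L i \<longrightarrow> qresps (L i) = {}) \<and> inj_on snd (qresps (L i)) \<and>
        (\<forall>v j. (v,j)\<in>qresps (L i) \<longrightarrow> (\<exists>q r bt. GQ j q r v \<in> G \<and> curop (L i) = Rd r \<and> OEv (EInv i (opc (L i)) (Rd r) bt) \<in> Ob \<and> bt < q)))"
definition "c_tok N L \<longleftrightarrow> (\<forall>i j \<rho>. tok N L i j \<rho> \<le> 1)"
definition "c_einv L Ob \<longleftrightarrow> (\<forall>i k op t. OEv (EInv i k op t) \<in> Ob \<longrightarrow> 0 < k \<and> k \<le> opc (L i) \<and> (k = opc (L i) \<longrightarrow> op = curop (L i)))"
definition "c_einvu Ob \<longleftrightarrow> (\<forall>i k op t op' t'. OEv (EInv i k op t) \<in> Ob \<longrightarrow> OEv (EInv i k op' t') \<in> Ob \<longrightarrow> op = op' \<and> t = t')"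
definition "c_eres L Ob \<longleftrightarrow> (\<forall>i k op res t. OEv (ERes i k op res t) \<in> Ob \<longrightarrow> k \<le> opc (L i) \<and> (k = opc (L i) \<longrightarrow> \<not> busy (L i)) \<and> (\<exists>tsv. OUpd i k tsv \<in> Ob))"
definition "c_oupd L Ob \<longleftrightarrow> (\<forall>i k tsv. OUpd i k tsv \<in> Ob \<longrightarrow> k \<le> opc (L i))"
definition "c_oupdu Ob \<longleftrightarrow> (\<forall>i k tsv tsv'. OUpd i k tsv \<in> Ob \<longrightarrow> OUpd i k tsv' \<in> Ob \<longrightarrow> tsv = tsv')"
definition "c_i1 n G Ob \<longleftrightarrow> (\<forall>i k op res t tsv. OEv (ERes i k op res t) \<in> Ob \<longrightarrow> OUpd i k tsv \<in> Ob \<longrightarrow>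
        (\<exists>A. A \<subseteq> {1..n} \<and> card A = maj n \<and> (\<forall>j\<in>A. \<exists>a<t. GU j a (op_reg op) tsv \<in> G)))"
definition "c_i2 n G Ob \<longleftrightarrow> (\<forall>i k r bt tsv. OEv (EInv i k (Rd r) bt) \<in> Ob \<longrightarrow> OUpd i k tsv \<in> Ob \<longrightarrow>
        (\<exists>R. R \<subseteq> {1..n} \<and> card R = maj n \<and> (\<forall>j\<in>R. \<exists>q v. bt < q \<and> GQ j q r v \<in> G \<and> v \<le> tsv)))"

definition "InvNL n N L G Ob \<longleftrightarrow> c_mq n N G \<and> c_mu n N G \<and> c_mr N G \<and> c_ma N G \<and> c_gu n L G \<and> c_gq n L G \<and> c_guq G \<and>
   c_gs L G Ob \<and> c_gsq L G Ob \<and> c_acks L G Ob \<and> c_q L G Ob \<and> c_tok N L \<and> c_einv L Ob \<and> c_einvu Ob \<and>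
   c_eres L Ob \<and> c_oupd L Ob \<and> c_oupdu Ob \<and> c_i1 n G Ob \<and> c_i2 n G Ob"

definition Inv :: "nat \<Rightarrow> gstate \<Rightarrow> ghost set \<Rightarrow> obs set \<Rightarrow> bool" where
  "Inv n s G Ob \<longleftrightarrow> InvNL n (net s) (locals s) G Ob"

lemma Inv_init: "Inv n ginit {} {}"
  by (simp add: Inv_def InvNL_def ginit_def linit_def tok_def qph_def uph_def c_mq_def c_mu_def c_mr_def c_ma_def
   c_gu_def c_gq_def c_guq_def c_gs_def c_gsq_def c_acks_def c_q_def c_tok_def c_einv_def c_einvu_def c_eres_def
   c_oupd_def c_oupdu_def c_i1_def c_i2_def)



lemma mem_bcast: "(a,b,m) \<in># bcast n i m0 \<longleftrightarrow> a = i \<and> m = m0 \<and> b \<in> {1..n}"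
  unfolding bcast_def by auto

lemma len_filter_eq_upt: "length (filter (\<lambda>k. k = j) [a..<b]) = (if a \<le> j \<and> j < b then 1 else 0)"
proof -
  have "length (filter (\<lambda>k. k = j) [a..<b]) = card ({x. x = j} \<inter> set [a..<b])"
    by (rule distinct_length_filter) simp
  also have "{x. x = j} \<inter> set [a..<b] = (if a \<le> j \<and> j < b then {j} else {})" by auto
  finally show ?thesis by simp
qed

lemma size_bcast: "size (filter_mset (\<lambda>(a,b,m). a = i' \<and> b = j' \<and> P m) (bcast n i m0)) =
   (if i' = i \<and> P m0 \<and> j' \<in> {1..n} then 1 else 0)"
proof -
  have "size (filter_mset (\<lambda>(a,b,m). a = i' \<and> b = j' \<and> P m) (bcast n i m0)) =
        length (filter (\<lambda>(a,b,m). a = i' \<and> b = j' \<and> P m) (map (\<lambda>k. (i, k, m0)) [1..<n+1]))"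
    unfolding bcast_def by (metis mset_filter size_mset)
  also have "\<dots> = length (filter (\<lambda>k. i' = i \<and> k = j' \<and> P m0) [1..<n+1])"
    by (simp only: filter_map length_map comp_def case_prod_conv eq_commute[of i i'])
  also have "\<dots> = (if i' = i \<and> P m0 \<and> j' \<in> {1..n} then 1 else 0)"
  proof (cases "i' = i \<and> P m0")
    case True
    thus ?thesis using len_filter_eq_upt[of j' 1 "n+1"] by auto
  next
    case False
    thus ?thesis by auto
  qed
  finally show ?thesis .
qed

lemma size_filter_diff: "x \<in># N \<Longrightarrow> size (filter_mset P (N - {#x#})) = size (filter_mset P N) - (if P x then 1 else 0)"
proof -
  assume "x \<in># N"
  then obtain N0 where "N = add_mset x N0" by (metis insert_DiffM)
  thus ?thesis by simp
qed

lemmas cdefs = c_mq_def c_mu_def c_mr_def c_ma_def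
   c_gu_def c_gq_def c_guq_def c_gs_def c_gsq_def c_acks_def c_q_def c_tok_def c_einv_def c_einvu_def c_eres_def
   c_oupd_def c_oupdu_def c_i1_def c_i2_def

lemma inv_rd:
  fixes r :: reg
  assumes I: "InvNL n N L G Ob" and i: "i \<in> {1..n}" and nb: "\<not> busy (L i)"
  defines "t \<equiv> lt (L i) + 1" and "k \<equiv> opc (L i) + 1" and "\<rho> \<equiv> rid (L i) + 1"
  defines "L' \<equiv> L(i := (L i)\<lparr>lt := t, reading := True, rreg := r, rid := \<rho>, busy := True, opc := k, curop := Rd r\<rparr>)"
  shows "InvNL n (N + bcast n i (Query t \<rho> r)) L' (insert (GSQ i \<rho> r t) G) (Ob \<union> {OEv (EInv i k (Rd r) t)})"
proof -
  have mq: "c_mq n N G" and mu: "c_mu n N G" and mr: "c_mr N G" and ma: "c_ma N G" and gu: "c_gu n L G"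
    and gq: "c_gq n L G" and guq: "c_guq G" and gs: "c_gs L G Ob" and gsq: "c_gsq L G Ob" and ac: "c_acks L G Ob"
    and cq: "c_q L G Ob" and tk: "c_tok N L" and ei: "c_einv L Ob" and eiu: "c_einvu Ob" and er: "c_eres L Ob"
    and ou: "c_oupd L Ob" and ouu: "c_oupdu Ob" and i1: "c_i1 n G Ob" and i2: "c_i2 n G Ob"
    using I unfolding InvNL_def by auto
  have L'i: "L' i = (L i)\<lparr>lt := t, reading := True, rreg := r, rid := \<rho>, busy := True, opc := k, curop := Rd r\<rparr>"
    unfolding L'_def by simp
  have L'o: "\<And>p. p \<noteq> i \<Longrightarrow> L' p = L p" unfolding L'_def by simp
  have noupd: "\<And>tsv. OUpd i k tsv \<notin> Ob" using ou unfolding c_oupd_def k_def by fastforce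
  have qphi: "qph (Ob \<union> {OEv (EInv i k (Rd r) t)}) L' i" unfolding qph_def L'_def using noupd by simp
  have uph_other: "\<And>p. p \<noteq> i \<Longrightarrow> uph (Ob \<union> {OEv (EInv i k (Rd r) t)}) L' p = uph Ob L p"
    unfolding uph_def L'_def by auto
  have qph_other: "\<And>p. p \<noteq> i \<Longrightarrow> qph (Ob \<union> {OEv (EInv i k (Rd r) t)}) L' p = qph Ob L p"
    unfolding qph_def L'_def by auto
  have nuph: "\<not> uph Ob L i" "\<not> qph Ob L i" using nb unfolding uph_def qph_def by auto
  have acks0: "acks (L i) = {}" using ac nuph unfolding c_acks_def by auto
  have q0: "qresps (L i) = {}" using cq nuph unfolding c_q_def by auto
  have gsq_lt: "\<And>\<rho>' r' bt. GSQ i \<rho>' r' bt \<in> G \<Longrightarrow> \<rho>' < \<rho>" using gsq unfolding c_gsq_def \<rho>_def by fastforce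
  have gs_lt: "\<And>\<rho>' r' tsv. GS i \<rho>' r' tsv \<in> G \<Longrightarrow> \<rho>' < \<rho>" using gs unfolding c_gs_def \<rho>_def by fastforce
  show ?thesis unfolding InvNL_def
  proof (intro conjI)
    show "c_mq n (N + bcast n i (Query t \<rho> r)) (insert (GSQ i \<rho> r t) G)"
      using mq unfolding c_mq_def by (auto simp: mem_bcast)
    show "c_mu n (N + bcast n i (Query t \<rho> r)) (insert (GSQ i \<rho> r t) G)"
      using mu unfolding c_mu_def by (auto simp: mem_bcast)
    show "c_mr (N + bcast n i (Query t \<rho> r)) (insert (GSQ i \<rho> r t) G)"
      using mr unfolding c_mr_def by (fastforce simp: mem_bcast)
    show "c_ma (N + bcast n i (Query t \<rho> r)) (insert (GSQ i \<rho> r t) G)"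
      using ma unfolding c_ma_def by (fastforce simp: mem_bcast)
    show "c_gu n L' (insert (GSQ i \<rho> r t) G)"
      using gu unfolding c_gu_def L'_def t_def by fastforce
    show "c_gq n L' (insert (GSQ i \<rho> r t) G)"
      using gq unfolding c_gq_def L'_def t_def by fastforce
    show "c_guq (insert (GSQ i \<rho> r t) G)"
      using guq unfolding c_guq_def by blast
    show "c_gs L' (insert (GSQ i \<rho> r t) G) (Ob \<union> {OEv (EInv i k (Rd r) t)})"
      unfolding c_gs_def apply (intro allI impI)
      subgoal for p \<rho>' r' tsv using gs[unfolded c_gs_def, rule_format, of p \<rho>' r' tsv] gs_lt[of \<rho>' r' tsv] uph_other[of p]
        by (cases "p = i") (auto simp: L'i L'o)
      done
    show "c_gsq L' (insert (GSQ i \<rho> r t) G) (Ob \<union> {OEv (EInv i k (Rd r) t)})"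
      unfolding c_gsq_def apply (intro allI impI)
      subgoal for p \<rho>' r' bt using gsq[unfolded c_gsq_def, rule_format, of p \<rho>' r' bt] gsq_lt[of \<rho>' r' bt] qph_other[of p] qphi
        by (cases "p = i") (auto simp: L'i L'o)
      done
    show "c_acks L' (insert (GSQ i \<rho> r t) G) (Ob \<union> {OEv (EInv i k (Rd r) t)})"
      unfolding c_acks_def apply (intro allI)
      subgoal for p using ac[unfolded c_acks_def, rule_format, of p] uph_other[of p] acks0
        by (cases "p = i") (auto simp: L'i L'o)
      done
    show "c_q L' (insert (GSQ i \<rho> r t) G) (Ob \<union> {OEv (EInv i k (Rd r) t)})"
      unfolding c_q_def apply (intro allI)
      subgoal for p using cq[unfolded c_q_def, rule_format, of p] qph_other[of p] q0
        by (cases "p = i") (auto simp: L'i L'o)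
      done
    show "c_tok (N + bcast n i (Query t \<rho> r)) L'"
      unfolding c_tok_def
    proof (intro allI)
      fix i' j' \<rho>'
      have sb: "size (filter_mset (\<lambda>(a,b,m). a = i' \<and> b = j' \<and> isQ \<rho>' m) (bcast n i (Query t \<rho> r))) =
          (if i' = i \<and> \<rho>' = \<rho> \<and> j' \<in> {1..n} then 1 else 0)" using size_bcast[of i' j' "isQ \<rho>'"] by auto
      have sb2: "size (filter_mset (\<lambda>(a,b,m). a = j' \<and> b = i' \<and> isR \<rho>' m) (bcast n i (Query t \<rho> r))) = 0"
        using size_bcast[of j' i' "isR \<rho>'"] by auto
      have old: "tok N L i' j' \<rho>' \<le> 1" using tk unfolding c_tok_def by blast
      show "tok (N + bcast n i (Query t \<rho> r)) L' i' j' \<rho>' \<le> 1"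
      proof (cases "i' = i \<and> \<rho>' = \<rho>")
        case True
        have z1: "size (filter_mset (\<lambda>(a,b,m). a = i' \<and> b = j' \<and> isQ \<rho>' m) N) = 0"
        proof -
          have "\<forall>x. x \<in># N \<longrightarrow> \<not> (\<lambda>(a,b,m). a = i' \<and> b = j' \<and> isQ \<rho>' m) x"
          proof (intro allI impI)
            fix x assume "x \<in># N"
            then obtain a b m where x: "x = (a,b,m)" "(a,b,m) \<in># N" by (cases x) auto
            show "\<not> (\<lambda>(a,b,m). a = i' \<and> b = j' \<and> isQ \<rho>' m) x"
            proof
              assume "(\<lambda>(a,b,m). a = i' \<and> b = j' \<and> isQ \<rho>' m) x"
              hence "a = i" "isQ \<rho> m" using x True by auto
              then obtain bt r' where "m = Query bt \<rho> r'" by (cases m) auto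
              hence "GSQ i \<rho> r' bt \<in> G" using mq x \<open>a = i\<close> unfolding c_mq_def by blast
              thus False using gsq_lt by blast
            qed
          qed
          thus ?thesis by simp
        qed
        have z2: "size (filter_mset (\<lambda>(a,b,m). a = j' \<and> b = i' \<and> isR \<rho>' m) N) = 0"
        proof -
          have "\<forall>x. x \<in># N \<longrightarrow> \<not> (\<lambda>(a,b,m). a = j' \<and> b = i' \<and> isR \<rho>' m) x"
          proof (intro allI impI)
            fix x assume "x \<in># N"
            then obtain a b m where x: "x = (a,b,m)" "(a,b,m) \<in># N" by (cases x) auto
            show "\<not> (\<lambda>(a,b,m). a = j' \<and> b = i' \<and> isR \<rho>' m) x"
            proof
              assume "(\<lambda>(a,b,m). a = j' \<and> b = i' \<and> isR \<rho>' m) x"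
              hence "b = i" "isR \<rho> m" using x True by auto
              then obtain q v where "m = Response q \<rho> v" by (cases m) auto
              then obtain r' bt where "GSQ i \<rho> r' bt \<in> G" using mr x \<open>b = i\<close> unfolding c_mr_def by blast
              thus False using gsq_lt by blast
            qed
          qed
          thus ?thesis by simp
        qed
        show ?thesis unfolding tok_def filter_union_mset size_union sb sb2 z1 z2 using True q0 by (simp add: L'i)
      next
        case False
        show ?thesis
        proof (cases "i' = i")
          case True
          thus ?thesis using old \<open>\<not> (i' = i \<and> \<rho>' = \<rho>)\<close> q0 unfolding tok_def filter_union_mset size_union sb sb2 by (simp add: L'i)
        next
          case False
          thus ?thesis using old unfolding tok_def filter_union_mset size_union sb sb2 by (simp add: L'o)
        qed
      qed
    qed
    show "c_einv L' (Ob \<union> {OEv (EInv i k (Rd r) t)})"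
      unfolding c_einv_def apply (intro allI impI)
      subgoal for p k' op' t' using ei[unfolded c_einv_def, rule_format, of p k' op' t']
        by (cases "p = i") (auto simp: L'i L'o k_def)
      done
    show "c_einvu (Ob \<union> {OEv (EInv i k (Rd r) t)})"
      unfolding c_einvu_def apply (intro allI impI)
      subgoal for p k' op1 t1 op2 t2
        using eiu[unfolded c_einvu_def, rule_format, of p k' op1 t1 op2 t2]
          ei[unfolded c_einv_def, rule_format, of p k' op1 t1] ei[unfolded c_einv_def, rule_format, of p k' op2 t2]
        by (auto simp: k_def)
      done
    show "c_eres L' (Ob \<union> {OEv (EInv i k (Rd r) t)})"
      unfolding c_eres_def apply (intro allI impI)
      subgoal for p k' op' res' t' using er[unfolded c_eres_def, rule_format, of p k' op' res' t']
        by (cases "p = i") (auto simp: L'i L'o k_def)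
      done
    show "c_oupd L' (Ob \<union> {OEv (EInv i k (Rd r) t)})"
      unfolding c_oupd_def apply (intro allI impI)
      subgoal for p k' tsv using ou[unfolded c_oupd_def, rule_format, of p k' tsv]
        by (cases "p = i") (auto simp: L'i L'o k_def)
      done
    show "c_oupdu (Ob \<union> {OEv (EInv i k (Rd r) t)})"
      using ouu unfolding c_oupdu_def by auto
    show "c_i1 n (insert (GSQ i \<rho> r t) G) (Ob \<union> {OEv (EInv i k (Rd r) t)})"
      unfolding c_i1_def apply (intro allI impI)
      subgoal for p k' op' res' t' tsv using i1[unfolded c_i1_def, rule_format, of p k' op' res' t' tsv]
        by auto
      done
    show "c_i2 n (insert (GSQ i \<rho> r t) G) (Ob \<union> {OEv (EInv i k (Rd r) t)})"
      unfolding c_i2_def apply (intro allI impI)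
      subgoal for p k' r' bt tsv using i2[unfolded c_i2_def, rule_format, of p k' r' bt tsv] noupd[of tsv]
        by auto
      done
  qed
qed

lemma inv_extract:
  assumes "InvNL n N L G Ob"
  shows "c_mq n N G" "c_mu n N G" "c_mr N G" "c_ma N G" "c_gu n L G"
    "c_gq n L G" "c_guq G" "c_gs L G Ob" "c_gsq L G Ob" "c_acks L G Ob"
    "c_q L G Ob" "c_tok N L" "c_einv L Ob" "c_einvu Ob" "c_eres L Ob"
    "c_oupd L Ob" "c_oupdu Ob" "c_i1 n G Ob" "c_i2 n G Ob"
  using assms unfolding InvNL_def by auto

lemma size_filter_diff_le: "size (filter_mset P (N - {#x#})) \<le> size (filter_mset P N)"
  by (simp add: size_mset_mono multiset_filter_mono)

lemma tok_diff_le: "tok (N - {#y#}) L i j \<rho> \<le> tok N L i j \<rho>"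
  unfolding tok_def using size_filter_diff_le
  by (metis (no_types, lifting) add_le_mono le_refl)

lemma inv_remove:
  assumes I: "InvNL n N L G Ob" and y: "y \<in># N"
  shows "InvNL n (N - {#y#}) L G Ob"
proof -
  note E = inv_extract[OF I]
  have sub: "\<And>x. x \<in># N - {#y#} \<Longrightarrow> x \<in># N" by (rule in_diffD)
  show ?thesis unfolding InvNL_def
  proof (intro conjI)
    show "c_mq n (N - {#y#}) G" using E(1) sub unfolding c_mq_def by blast
    show "c_mu n (N - {#y#}) G" using E(2) sub unfolding c_mu_def by blast
    show "c_mr (N - {#y#}) G" using E(3) sub unfolding c_mr_def by blast
    show "c_ma (N - {#y#}) G" using E(4) sub unfolding c_ma_def by blast
    show "c_tok (N - {#y#}) L" using E(12) tok_diff_le unfolding c_tok_def by (meson le_trans)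
  qed (use E in auto)
qed

lemma inv_wr:
  fixes r :: reg and v :: int
  assumes I: "InvNL n N L G Ob" and i: "i \<in> {1..n}" and nb: "\<not> busy (L i)"
  defines "t \<equiv> lt (L i) + 1" and "k \<equiv> opc (L i) + 1" and "\<rho> \<equiv> rid (L i) + 1"
  defines "L' \<equiv> L(i := (L i)\<lparr>lt := t, reading := False, rid := \<rho>, busy := True, opc := k, curop := Wr r v\<rparr>)"
  defines "Ob' \<equiv> Ob \<union> {OEv (EInv i k (Wr r v) t), OUpd i k ((t,i),v)}"
  shows "InvNL n (N + bcast n i (Update t \<rho> r ((t,i),v))) L' (insert (GS i \<rho> r ((t,i),v)) G) Ob'"
proof -
  note E = inv_extract[OF I]
  have mq: "c_mq n N G" and mu: "c_mu n N G" and mr: "c_mr N G" and ma: "c_ma N G" and gu: "c_gu n L G"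
    and gq: "c_gq n L G" and guq: "c_guq G" and gs: "c_gs L G Ob" and gsq: "c_gsq L G Ob" and ac: "c_acks L G Ob"
    and cq: "c_q L G Ob" and tk: "c_tok N L" and ei: "c_einv L Ob" and eiu: "c_einvu Ob" and er: "c_eres L Ob"
    and ou: "c_oupd L Ob" and ouu: "c_oupdu Ob" and i1: "c_i1 n G Ob" and i2: "c_i2 n G Ob" using E by auto
  have L'i: "L' i = (L i)\<lparr>lt := t, reading := False, rid := \<rho>, busy := True, opc := k, curop := Wr r v\<rparr>"
    unfolding L'_def by simp
  have L'o: "\<And>p. p \<noteq> i \<Longrightarrow> L' p = L p" unfolding L'_def by simp
  have noupd: "\<And>tsv. OUpd i k tsv \<notin> Ob" using ou unfolding c_oupd_def k_def by fastforce
  have uphi: "uph Ob' L' i" unfolding uph_def Ob'_def using L'i by auto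
  have uph_other: "\<And>p. p \<noteq> i \<Longrightarrow> uph Ob' L' p = uph Ob L p"
    unfolding uph_def Ob'_def using L'o by auto
  have qph_other: "\<And>p. p \<noteq> i \<Longrightarrow> qph Ob' L' p = qph Ob L p"
    unfolding qph_def Ob'_def using L'o by auto
  have nuph: "\<not> uph Ob L i" "\<not> qph Ob L i" using nb unfolding uph_def qph_def by auto
  have acks0: "acks (L i) = {}" using ac nuph unfolding c_acks_def by auto
  have q0: "qresps (L i) = {}" using cq nuph unfolding c_q_def by auto
  have gsq_lt: "\<And>\<rho>' r' bt. GSQ i \<rho>' r' bt \<in> G \<Longrightarrow> \<rho>' < \<rho>" using gsq unfolding c_gsq_def \<rho>_def by fastforce
  have gs_lt: "\<And>\<rho>' r' tsv. GS i \<rho>' r' tsv \<in> G \<Longrightarrow> \<rho>' < \<rho>" using gs unfolding c_gs_def \<rho>_def by fastforce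
  have einv_lt: "\<And>k' op' t'. OEv (EInv i k' op' t') \<in> Ob \<Longrightarrow> k' < k"
    using ei unfolding c_einv_def k_def by fastforce
  have eres_lt: "\<And>k' op' res' t'. OEv (ERes i k' op' res' t') \<in> Ob \<Longrightarrow> k' < k"
    using er unfolding c_eres_def k_def by fastforce
  show ?thesis unfolding InvNL_def
  proof (intro conjI)
    show "c_mq n (N + bcast n i (Update t \<rho> r ((t,i),v))) (insert (GS i \<rho> r ((t,i),v)) G)"
      using mq unfolding c_mq_def by (auto simp: mem_bcast)
    show "c_mu n (N + bcast n i (Update t \<rho> r ((t,i),v))) (insert (GS i \<rho> r ((t,i),v)) G)"
      using mu unfolding c_mu_def by (auto simp: mem_bcast)
    show "c_mr (N + bcast n i (Update t \<rho> r ((t,i),v))) (insert (GS i \<rho> r ((t,i),v)) G)"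
      using mr unfolding c_mr_def by (fastforce simp: mem_bcast)
    show "c_ma (N + bcast n i (Update t \<rho> r ((t,i),v))) (insert (GS i \<rho> r ((t,i),v)) G)"
      using ma unfolding c_ma_def by (fastforce simp: mem_bcast)
    show "c_gu n L' (insert (GS i \<rho> r ((t,i),v)) G)"
      using gu unfolding c_gu_def L'_def t_def by fastforce
    show "c_gq n L' (insert (GS i \<rho> r ((t,i),v)) G)"
      using gq unfolding c_gq_def L'_def t_def by fastforce
    show "c_guq (insert (GS i \<rho> r ((t,i),v)) G)"
      using guq unfolding c_guq_def by blast
    show "c_gs L' (insert (GS i \<rho> r ((t,i),v)) G) Ob'"
      unfolding c_gs_def apply (intro allI impI)
      subgoal for p \<rho>' r' tsv using gs[unfolded c_gs_def, rule_format, of p \<rho>' r' tsv] gs_lt[of \<rho>' r' tsv] uph_other[of p] uphi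
        by (cases "p = i") (auto simp: L'i L'o Ob'_def)
      done
    show "c_gsq L' (insert (GS i \<rho> r ((t,i),v)) G) Ob'"
      unfolding c_gsq_def apply (intro allI impI)
      subgoal for p \<rho>' r' bt using gsq[unfolded c_gsq_def, rule_format, of p \<rho>' r' bt] gsq_lt[of \<rho>' r' bt] qph_other[of p]
        by (cases "p = i") (auto simp: L'i L'o Ob'_def)
      done
    show "c_acks L' (insert (GS i \<rho> r ((t,i),v)) G) Ob'"
      unfolding c_acks_def apply (intro allI)
      subgoal for p using ac[unfolded c_acks_def, rule_format, of p] uph_other[of p] acks0
        by (cases "p = i") (auto simp: L'i L'o Ob'_def)
      done
    show "c_q L' (insert (GS i \<rho> r ((t,i),v)) G) Ob'"
      unfolding c_q_def apply (intro allI)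
      subgoal for p using cq[unfolded c_q_def, rule_format, of p] qph_other[of p] q0
        by (cases "p = i") (auto simp: L'i L'o Ob'_def)
      done
    show "c_tok (N + bcast n i (Update t \<rho> r ((t,i),v))) L'"
      unfolding c_tok_def
    proof (intro allI)
      fix i' j' \<rho>'
      have sb: "size (filter_mset (\<lambda>(a,b,m). a = i' \<and> b = j' \<and> isQ \<rho>' m) (bcast n i (Update t \<rho> r ((t,i),v)))) = 0"
        using size_bcast[of i' j' "isQ \<rho>'"] by auto
      have sb2: "size (filter_mset (\<lambda>(a,b,m). a = j' \<and> b = i' \<and> isR \<rho>' m) (bcast n i (Update t \<rho> r ((t,i),v)))) = 0"
        using size_bcast[of j' i' "isR \<rho>'"] by auto
      have old: "tok N L i' j' \<rho>' \<le> 1" using tk unfolding c_tok_def by blast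
      show "tok (N + bcast n i (Update t \<rho> r ((t,i),v))) L' i' j' \<rho>' \<le> 1"
      proof (cases "i' = i")
        case True
        thus ?thesis using old q0 unfolding tok_def filter_union_mset size_union sb sb2 by (simp add: L'i)
      next
        case False
        thus ?thesis using old unfolding tok_def filter_union_mset size_union sb sb2 by (simp add: L'o)
      qed
    qed
    show "c_einv L' Ob'"
      unfolding c_einv_def apply (intro allI impI)
      subgoal for p k' op' t' using ei[unfolded c_einv_def, rule_format, of p k' op' t']
        by (cases "p = i") (auto simp: L'i L'o k_def Ob'_def)
      done
    show "c_einvu Ob'"
      unfolding c_einvu_def apply (intro allI impI)
      subgoal for p k' op1 t1 op2 t2
        using eiu[unfolded c_einvu_def, rule_format, of p k' op1 t1 op2 t2] einv_lt[of k' op1 t1] einv_lt[of k' op2 t2]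
        by (auto simp: Ob'_def)
      done
    show "c_eres L' Ob'"
      unfolding c_eres_def apply (intro allI impI)
      subgoal for p k' op' res' t' using er[unfolded c_eres_def, rule_format, of p k' op' res' t'] eres_lt[of k' op' res' t']
        by (cases "p = i") (auto simp: L'i L'o Ob'_def)
      done
    show "c_oupd L' Ob'"
      unfolding c_oupd_def apply (intro allI impI)
      subgoal for p k' tsv using ou[unfolded c_oupd_def, rule_format, of p k' tsv]
        by (cases "p = i") (auto simp: L'i L'o k_def Ob'_def)
      done
    show "c_oupdu Ob'"
      unfolding c_oupdu_def apply (intro allI impI)
      subgoal for p k' tsv1 tsv2 using ouu[unfolded c_oupdu_def, rule_format, of p k' tsv1 tsv2] noupd[of tsv1] noupd[of tsv2]
        by (auto simp: Ob'_def)
      done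
    show "c_i1 n (insert (GS i \<rho> r ((t,i),v)) G) Ob'"
      unfolding c_i1_def apply (intro allI impI)
      subgoal for p k' op' res' t' tsv using i1[unfolded c_i1_def, rule_format, of p k' op' res' t' tsv] eres_lt[of k' op' res' t']
        by (auto simp: Ob'_def)
      done
    show "c_i2 n (insert (GS i \<rho> r ((t,i),v)) G) Ob'"
      unfolding c_i2_def apply (intro allI impI)
      subgoal for p k' r' bt tsv using i2[unfolded c_i2_def, rule_format, of p k' r' bt tsv] einv_lt[of k' "Rd r'" bt]
        by (auto simp: Ob'_def)
      done
  qed
qed

definition same_ctl :: "(pid \<Rightarrow> lstate) \<Rightarrow> (pid \<Rightarrow> lstate) \<Rightarrow> bool" where
  "same_ctl L L' \<longleftrightarrow> (\<forall>p. rid (L' p) = rid (L p) \<and> busy (L' p) = busy (L p) \<and> opc (L' p) = opc (L p) \<and>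
     curop (L' p) = curop (L p) \<and> rreg (L' p) = rreg (L p) \<and> acks (L' p) = acks (L p) \<and>
     qresps (L' p) = qresps (L p) \<and> lt (L p) \<le> lt (L' p))"

lemma ctl_transfer:
  assumes "same_ctl L L'"
  shows "uph Ob L' = uph Ob L" "qph Ob L' = qph Ob L"
    "c_gs L G Ob \<Longrightarrow> c_gs L' G Ob" "c_gsq L G Ob \<Longrightarrow> c_gsq L' G Ob"
    "c_acks L G Ob \<Longrightarrow> c_acks L' G Ob" "c_q L G Ob \<Longrightarrow> c_q L' G Ob"
    "c_einv L Ob \<Longrightarrow> c_einv L' Ob" "c_eres L Ob \<Longrightarrow> c_eres L' Ob" "c_oupd L Ob \<Longrightarrow> c_oupd L' Ob"
    "tok N L' = tok N L"
proof -
  have e: "\<And>p. rid (L' p) = rid (L p) \<and> busy (L' p) = busy (L p) \<and> opc (L' p) = opc (L p) \<and>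
     curop (L' p) = curop (L p) \<and> rreg (L' p) = rreg (L p) \<and> acks (L' p) = acks (L p) \<and>
     qresps (L' p) = qresps (L p) \<and> lt (L p) \<le> lt (L' p)" using assms unfolding same_ctl_def by blast
  show u: "uph Ob L' = uph Ob L" unfolding uph_def by (rule ext) (simp add: e)
  show q: "qph Ob L' = qph Ob L" unfolding qph_def by (rule ext) (simp add: e)
  show "c_gs L G Ob \<Longrightarrow> c_gs L' G Ob" unfolding c_gs_def u by (simp add: e)
  show "c_gsq L G Ob \<Longrightarrow> c_gsq L' G Ob" unfolding c_gsq_def q by (simp add: e)
  show "c_acks L G Ob \<Longrightarrow> c_acks L' G Ob"
  proof -
    assume h: "c_acks L G Ob"
    show "c_acks L' G Ob" unfolding c_acks_def
    proof (intro allI conjI impI ballI)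
      fix p assume "\<not> uph Ob L' p" thus "acks (L' p) = {}" using h e[of p] u unfolding c_acks_def by simp
    next
      fix p j assume "j \<in> acks (L' p)"
      hence "j \<in> acks (L p)" using e[of p] by simp
      with h obtain a tsv where "a < lt (L p)" "OUpd p (opc (L p)) tsv \<in> Ob" "GU j a (op_reg (curop (L p))) tsv \<in> G"
        unfolding c_acks_def by blast
      thus "\<exists>a tsv. a < lt (L' p) \<and> OUpd p (opc (L' p)) tsv \<in> Ob \<and> GU j a (op_reg (curop (L' p))) tsv \<in> G"
        using e[of p] by (metis order_less_le_trans)
    qed
  qed
  show "c_q L G Ob \<Longrightarrow> c_q L' G Ob" unfolding c_q_def q by (simp add: e)
  show "c_einv L Ob \<Longrightarrow> c_einv L' Ob" unfolding c_einv_def by (simp add: e)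
  show "c_eres L Ob \<Longrightarrow> c_eres L' Ob" unfolding c_eres_def by (simp add: e)
  show "c_oupd L Ob \<Longrightarrow> c_oupd L' Ob" unfolding c_oupd_def by (simp add: e)
  show "tok N L' = tok N L" unfolding tok_def by (rule ext)+ (simp add: e)
qed

lemma size_filter_swap: "y \<in># N \<Longrightarrow> size (filter_mset P (N - {#y#} + {#x#})) =
   size (filter_mset P N) - (if P y then 1 else 0) + (if P x then 1 else 0)"
proof -
  assume "y \<in># N"
  then obtain N0 where "N = add_mset y N0" by (metis insert_DiffM)
  thus ?thesis by (simp add: filter_single_mset)
qed

lemma size_filter_pos: "y \<in># N \<Longrightarrow> P y \<Longrightarrow> 1 \<le> size (filter_mset P N)"
proof -
  assume "y \<in># N" "P y"
  then obtain N0 where "N = add_mset y N0" by (metis insert_DiffM)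
  thus ?thesis using \<open>P y\<close> by simp
qed

lemma i1_mono: "c_i1 n G Ob \<Longrightarrow> G \<subseteq> G' \<Longrightarrow> c_i1 n G' Ob"
  unfolding c_i1_def
proof (intro allI impI)
  fix i k op res t tsv
  assume h: "\<forall>i k op res t tsv. OEv (ERes i k op res t) \<in> Ob \<longrightarrow> OUpd i k tsv \<in> Ob \<longrightarrow>
        (\<exists>A. A \<subseteq> {1..n} \<and> card A = maj n \<and> (\<forall>j\<in>A. \<exists>a<t. GU j a (op_reg op) tsv \<in> G))"
    and s: "G \<subseteq> G'" and a: "OEv (ERes i k op res t) \<in> Ob" "OUpd i k tsv \<in> Ob"
  from h[rule_format, OF a] obtain A where A: "A \<subseteq> {1..n}" "card A = maj n" "\<forall>j\<in>A. \<exists>a<t. GU j a (op_reg op) tsv \<in> G" by (elim exE conjE)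
  show "\<exists>A. A \<subseteq> {1..n} \<and> card A = maj n \<and> (\<forall>j\<in>A. \<exists>a<t. GU j a (op_reg op) tsv \<in> G')"
  proof (intro exI[of _ A] conjI ballI)
    fix j assume "j \<in> A"
    then obtain a where "a < t" "GU j a (op_reg op) tsv \<in> G" using A(3) by blast
    thus "\<exists>a<t. GU j a (op_reg op) tsv \<in> G'" using s by blast
  qed (use A in auto)
qed

lemma i2_mono: "c_i2 n G Ob \<Longrightarrow> G \<subseteq> G' \<Longrightarrow> c_i2 n G' Ob"
  unfolding c_i2_def
proof (intro allI impI)
  fix i k r bt tsv
  assume h: "\<forall>i k r bt tsv. OEv (EInv i k (Rd r) bt) \<in> Ob \<longrightarrow> OUpd i k tsv \<in> Ob \<longrightarrow>
        (\<exists>R. R \<subseteq> {1..n} \<and> card R = maj n \<and> (\<forall>j\<in>R. \<exists>q v. bt < q \<and> GQ j q r v \<in> G \<and> v \<le> tsv))"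
    and s: "G \<subseteq> G'" and a: "OEv (EInv i k (Rd r) bt) \<in> Ob" "OUpd i k tsv \<in> Ob"
  from h[rule_format, OF a] obtain R where R: "R \<subseteq> {1..n}" "card R = maj n" "\<forall>j\<in>R. \<exists>q v. bt < q \<and> GQ j q r v \<in> G \<and> v \<le> tsv" by (elim exE conjE)
  show "\<exists>R. R \<subseteq> {1..n} \<and> card R = maj n \<and> (\<forall>j\<in>R. \<exists>q v. bt < q \<and> GQ j q r v \<in> G' \<and> v \<le> tsv)"
  proof (intro exI[of _ R] conjI ballI)
    fix j assume "j \<in> R"
    then obtain q v where "bt < q" "GQ j q r v \<in> G" "v \<le> tsv" using R(3) by blast
    thus "\<exists>q v. bt < q \<and> GQ j q r v \<in> G' \<and> v \<le> tsv" using s by blast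
  qed (use R in auto)
qed

lemma acks_mono:
  assumes h: "c_acks L G Ob" and s: "G \<subseteq> G'" shows "c_acks L G' Ob"
  unfolding c_acks_def
proof (intro allI conjI impI ballI)
  fix p assume "\<not> uph Ob L p" thus "acks (L p) = {}" using h unfolding c_acks_def by blast
next
  fix p j assume "j \<in> acks (L p)"
  with h obtain a tsv where "a < lt (L p)" "OUpd p (opc (L p)) tsv \<in> Ob" "GU j a (op_reg (curop (L p))) tsv \<in> G"
    unfolding c_acks_def by blast
  thus "\<exists>a tsv. a < lt (L p) \<and> OUpd p (opc (L p)) tsv \<in> Ob \<and> GU j a (op_reg (curop (L p))) tsv \<in> G'"
    using s by blast
qed

lemma q_mono:
  assumes h: "c_q L G Ob" and s: "G \<subseteq> G'" shows "c_q L G' Ob"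
  unfolding c_q_def
proof (intro allI conjI impI)
  fix p assume "\<not> qph Ob L p" thus "qresps (L p) = {}" using h unfolding c_q_def by blast
next
  fix p show "inj_on snd (qresps (L p))" using h unfolding c_q_def by blast
next
  fix p v j assume "(v, j) \<in> qresps (L p)"
  with h obtain q r bt where "GQ j q r v \<in> G" "curop (L p) = Rd r" "OEv (EInv p (opc (L p)) (Rd r) bt) \<in> Ob" "bt < q"
    unfolding c_q_def by blast
  thus "\<exists>q r bt. GQ j q r v \<in> G' \<and> curop (L p) = Rd r \<and> OEv (EInv p (opc (L p)) (Rd r) bt) \<in> Ob \<and> bt < q"
    using s by blast
qed

lemma inv_query:
  assumes I: "InvNL n N L G Ob" and y: "(j,i,Query bt \<rho> r) \<in># N"
  defines "q \<equiv> max (lt (L i)) bt + 1" and "v \<equiv> tvps (L i) r"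
  defines "L' \<equiv> L(i := (L i)\<lparr>lt := q\<rparr>)"
  shows "InvNL n (N - {#(j,i,Query bt \<rho> r)#} + {#(i,j,Response q \<rho> v)#}) L' (insert (GQ i q r v) G) Ob"
proof -
  note E = inv_extract[OF I]
  have sc: "same_ctl L L'" unfolding same_ctl_def L'_def q_def by auto
  note T = ctl_transfer[OF sc]
  have sub: "\<And>x. x \<in># N - {#(j,i,Query bt \<rho> r)#} \<Longrightarrow> x \<in># N" by (rule in_diffD)
  have ii: "i \<in> {1..n}" and gsqj: "GSQ j \<rho> r bt \<in> G" using E(1) y unfolding c_mq_def by blast+
  let ?N' = "N - {#(j,i,Query bt \<rho> r)#} + {#(i,j,Response q \<rho> v)#}"
  show ?thesis unfolding InvNL_def
  proof (intro conjI)
    show "c_mq n ?N' (insert (GQ i q r v) G)" using E(1) unfolding c_mq_def by (auto dest: in_diffD)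
    show "c_mu n ?N' (insert (GQ i q r v) G)" using E(2) unfolding c_mu_def by (auto dest: in_diffD)
    show "c_mr ?N' (insert (GQ i q r v) G)" unfolding c_mr_def
    proof (intro allI impI)
      fix a b q' \<rho>' v' assume "(a,b,Response q' \<rho>' v') \<in># ?N'"
      hence "(a,b,Response q' \<rho>' v') \<in># N \<or> (a = i \<and> b = j \<and> q' = q \<and> \<rho>' = \<rho> \<and> v' = v)" by (auto dest: in_diffD)
      thus "\<exists>rr bb. GQ a q' rr v' \<in> insert (GQ i q r v) G \<and> GSQ b \<rho>' rr bb \<in> insert (GQ i q r v) G \<and> bb < q'"
      proof
        assume "(a,b,Response q' \<rho>' v') \<in># N"
        then obtain r' bt' where "GQ a q' r' v' \<in> G" "GSQ b \<rho>' r' bt' \<in> G" "bt' < q'"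
          using E(3) unfolding c_mr_def by blast
        thus ?thesis by blast
      next
        assume "a = i \<and> b = j \<and> q' = q \<and> \<rho>' = \<rho> \<and> v' = v"
        thus ?thesis using gsqj by (intro exI[of _ r] exI[of _ bt]) (auto simp: q_def)
      qed
    qed
    show "c_ma ?N' (insert (GQ i q r v) G)" unfolding c_ma_def
    proof (intro allI impI)
      fix a b at' \<rho>' assume "(a,b,Ack at' \<rho>') \<in># ?N'"
      hence "(a,b,Ack at' \<rho>') \<in># N" by (auto dest: in_diffD)
      then obtain r' tsv where "GU a at' r' tsv \<in> G" "GS b \<rho>' r' tsv \<in> G"
        using E(4) unfolding c_ma_def by blast
      thus "\<exists>rr tsv. GU a at' rr tsv \<in> insert (GQ i q r v) G \<and> GS b \<rho>' rr tsv \<in> insert (GQ i q r v) G" by blast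
    qed
    show "c_gu n L' (insert (GQ i q r v) G)"
      unfolding c_gu_def apply (intro allI impI)
      subgoal for p a r' tsv using E(5)[unfolded c_gu_def, rule_format, of p a r' tsv]
        by (cases "p = i") (auto simp: L'_def q_def)
      done
    show "c_gq n L' (insert (GQ i q r v) G)"
      unfolding c_gq_def apply (intro allI impI)
      subgoal for p q' r' v' using E(6)[unfolded c_gq_def, rule_format, of p q' r' v'] ii
        by (cases "p = i") (auto simp: L'_def q_def)
      done
    show "c_guq (insert (GQ i q r v) G)"
      unfolding c_guq_def apply (intro allI impI)
    proof -
      fix p a r' tsv q' v'
      assume h1: "GU p a r' tsv \<in> insert (GQ i q r v) G" and h2: "GQ p q' r' v' \<in> insert (GQ i q r v) G" and h3: "a < q'"
      have g1: "GU p a r' tsv \<in> G" using h1 by simp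
      show "tsv \<le> v'"
      proof (cases "GQ p q' r' v' \<in> G")
        case True thus ?thesis using E(7)[unfolded c_guq_def, rule_format, of p a r' tsv q' v'] g1 h3 by blast
      next
        case False
        hence "p = i" "q' = q" "r' = r" "v' = v" using h2 by auto
        thus ?thesis using E(5)[unfolded c_gu_def, rule_format, OF g1] by (simp add: v_def)
      qed
    qed
    show "c_gs L' (insert (GQ i q r v) G) Ob" using T(3)[OF E(8)] unfolding c_gs_def by simp
    show "c_gsq L' (insert (GQ i q r v) G) Ob" using T(4)[OF E(9)] unfolding c_gsq_def by simp
    show "c_acks L' (insert (GQ i q r v) G) Ob" by (rule acks_mono[OF T(5)[OF E(10)] subset_insertI])
    show "c_q L' (insert (GQ i q r v) G) Ob" by (rule q_mono[OF T(6)[OF E(11)] subset_insertI])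
    show "c_tok ?N' L'" unfolding c_tok_def T(10)
    proof (intro allI)
      fix i' j' \<rho>'
      have "tok ?N' L i' j' \<rho>' = tok N L i' j' \<rho>'"
      proof -
        have p1: "(if (\<lambda>(a,b,m). a = i' \<and> b = j' \<and> isQ \<rho>' m) (j,i,Query bt \<rho> r) then 1 else 0) \<le>
            size (filter_mset (\<lambda>(a,b,m). a = i' \<and> b = j' \<and> isQ \<rho>' m) N)"
          using size_filter_pos[OF y, of "\<lambda>(a,b,m). a = i' \<and> b = j' \<and> isQ \<rho>' m"] by auto
        have c1: "(if (\<lambda>(a,b,m). a = i' \<and> b = j' \<and> isQ \<rho>' m) (i,j,Response q \<rho> v) then 1 else 0) = (0::nat)" by simp
        have c2: "(if (\<lambda>(a,b,m). a = j' \<and> b = i' \<and> isR \<rho>' m) (j,i,Query bt \<rho> r) then 1 else 0) = (0::nat)" by simp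
        have c3: "(if (\<lambda>(a,b,m). a = j' \<and> b = i' \<and> isR \<rho>' m) (i,j,Response q \<rho> v) then 1 else 0) =
                  (if (\<lambda>(a,b,m). a = i' \<and> b = j' \<and> isQ \<rho>' m) (j,i,Query bt \<rho> r) then 1 else (0::nat))" by auto
        show ?thesis unfolding tok_def size_filter_swap[OF y] c1 c2 c3 using p1 by linarith
      qed
      thus "tok ?N' L i' j' \<rho>' \<le> 1" using E(12) unfolding c_tok_def by simp
    qed
    show "c_einv L' Ob" using T(7)[OF E(13)] .
    show "c_einvu Ob" using E(14) .
    show "c_eres L' Ob" using T(8)[OF E(15)] .
    show "c_oupd L' Ob" using T(9)[OF E(16)] .
    show "c_oupdu Ob" using E(17) .
    show "c_i1 n (insert (GQ i q r v) G) Ob" by (rule i1_mono[OF E(18) subset_insertI])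
    show "c_i2 n (insert (GQ i q r v) G) Ob" by (rule i2_mono[OF E(19) subset_insertI])
  qed
qed

lemma inv_update:
  assumes I: "InvNL n N L G Ob" and y: "(j,i,Update at \<rho> r tsv) \<in># N"
  defines "a' \<equiv> max (lt (L i)) at + 1"
  defines "L' \<equiv> L(i := (L i)\<lparr>lt := a', tvps := (tvps (L i))(r := max (tvps (L i) r) tsv)\<rparr>)"
  shows "InvNL n (N - {#(j,i,Update at \<rho> r tsv)#} + {#(i,j,Ack a' \<rho>)#}) L' (insert (GU i a' r tsv) G) Ob"
proof -
  note E = inv_extract[OF I]
  have sc: "same_ctl L L'" unfolding same_ctl_def L'_def a'_def by auto
  note T = ctl_transfer[OF sc]
  have ii: "i \<in> {1..n}" and gsj: "GS j \<rho> r tsv \<in> G" using E(2) y unfolding c_mu_def by blast+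
  let ?N' = "N - {#(j,i,Update at \<rho> r tsv)#} + {#(i,j,Ack a' \<rho>)#}"
  let ?G' = "insert (GU i a' r tsv) G"
  show ?thesis unfolding InvNL_def
  proof (intro conjI)
    show "c_mq n ?N' ?G'" using E(1) unfolding c_mq_def by (auto dest: in_diffD)
    show "c_mu n ?N' ?G'" using E(2) unfolding c_mu_def by (auto dest: in_diffD)
    show "c_mr ?N' ?G'" unfolding c_mr_def
    proof (intro allI impI)
      fix a b q' \<rho>' v' assume "(a,b,Response q' \<rho>' v') \<in># ?N'"
      hence "(a,b,Response q' \<rho>' v') \<in># N" by (auto dest: in_diffD)
      then obtain r' bt' where "GQ a q' r' v' \<in> G" "GSQ b \<rho>' r' bt' \<in> G" "bt' < q'"
        using E(3) unfolding c_mr_def by blast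
      thus "\<exists>rr bb. GQ a q' rr v' \<in> ?G' \<and> GSQ b \<rho>' rr bb \<in> ?G' \<and> bb < q'" by blast
    qed
    show "c_ma ?N' ?G'" unfolding c_ma_def
    proof (intro allI impI)
      fix a b at' \<rho>' assume "(a,b,Ack at' \<rho>') \<in># ?N'"
      hence "(a,b,Ack at' \<rho>') \<in># N \<or> (a = i \<and> b = j \<and> at' = a' \<and> \<rho>' = \<rho>)" by (auto dest: in_diffD)
      thus "\<exists>rr tt. GU a at' rr tt \<in> ?G' \<and> GS b \<rho>' rr tt \<in> ?G'"
      proof
        assume "(a,b,Ack at' \<rho>') \<in># N"
        then obtain r' tsv' where "GU a at' r' tsv' \<in> G" "GS b \<rho>' r' tsv' \<in> G"
          using E(4) unfolding c_ma_def by blast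
        thus ?thesis by blast
      next
        assume "a = i \<and> b = j \<and> at' = a' \<and> \<rho>' = \<rho>"
        thus ?thesis using gsj by (intro exI[of _ r] exI[of _ tsv]) auto
      qed
    qed
    show "c_gu n L' ?G'"
      unfolding c_gu_def
    proof (intro allI impI)
      fix p a r' tsv' assume h: "GU p a r' tsv' \<in> ?G'"
      show "p \<in> {1..n} \<and> a \<le> lt (L' p) \<and> tsv' \<le> tvps (L' p) r'"
      proof (cases "GU p a r' tsv' \<in> G")
        case True
        note o = E(5)[unfolded c_gu_def, rule_format, OF True]
        show ?thesis
        proof (cases "p = i")
          case True
          have "tvps (L i) r' \<le> tvps (L' i) r'" unfolding L'_def by auto
          hence "tsv' \<le> tvps (L' p) r'" using o True by (meson order_trans)
          moreover have "lt (L i) \<le> lt (L' i)" unfolding L'_def a'_def by simp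
          ultimately show ?thesis using o True by auto
        next
          case False thus ?thesis using o by (simp add: L'_def)
        qed
      next
        case False
        hence "p = i" "a = a'" "r' = r" "tsv' = tsv" using h by auto
        thus ?thesis using ii by (simp add: L'_def)
      qed
    qed
    show "c_gq n L' ?G'"
      unfolding c_gq_def
    proof (intro allI impI)
      fix p q' r' v' assume h: "GQ p q' r' v' \<in> ?G'"
      hence g: "GQ p q' r' v' \<in> G" by simp
      show "p \<in> {1..n} \<and> q' \<le> lt (L' p)"
        using E(6)[unfolded c_gq_def, rule_format, OF g] by (cases "p = i") (auto simp: L'_def a'_def)
    qed
    show "c_guq ?G'"
      unfolding c_guq_def
    proof (intro allI impI)
      fix p a r' tsv' q' v'
      assume h1: "GU p a r' tsv' \<in> ?G'" and h2: "GQ p q' r' v' \<in> ?G'" and h3: "a < q'"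
      have g2: "GQ p q' r' v' \<in> G" using h2 by simp
      show "tsv' \<le> v'"
      proof (cases "GU p a r' tsv' \<in> G")
        case True thus ?thesis using E(7)[unfolded c_guq_def, rule_format, of p a r' tsv' q' v'] g2 h3 by blast
      next
        case False
        hence "p = i" "a = a'" using h1 by auto
        moreover have "q' \<le> lt (L p)" using E(6)[unfolded c_gq_def, rule_format, OF g2] by simp
        ultimately show ?thesis using h3 by (simp add: a'_def)
      qed
    qed
    show "c_gs L' ?G' Ob" using T(3)[OF E(8)] unfolding c_gs_def by simp
    show "c_gsq L' ?G' Ob" using T(4)[OF E(9)] unfolding c_gsq_def by simp
    show "c_acks L' ?G' Ob" by (rule acks_mono[OF T(5)[OF E(10)] subset_insertI])
    show "c_q L' ?G' Ob" by (rule q_mono[OF T(6)[OF E(11)] subset_insertI])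
    show "c_tok ?N' L'" unfolding c_tok_def T(10)
    proof (intro allI)
      fix i' j' \<rho>'
      have c1: "\<And>P. (if (\<lambda>(a,b,m). P a b \<and> isQ \<rho>' m) (i,j,Ack a' \<rho>) then 1 else 0) = (0::nat)" by simp
      have c2: "\<And>P. (if (\<lambda>(a,b,m). P a b \<and> isR \<rho>' m) (i,j,Ack a' \<rho>) then 1 else 0) = (0::nat)" by simp
      have c3: "\<And>P. (if (\<lambda>(a,b,m). P a b \<and> isQ \<rho>' m) (j,i,Update at \<rho> r tsv) then 1 else 0) = (0::nat)" by simp
      have c4: "\<And>P. (if (\<lambda>(a,b,m). P a b \<and> isR \<rho>' m) (j,i,Update at \<rho> r tsv) then 1 else 0) = (0::nat)" by simp
      have "tok ?N' L i' j' \<rho>' = tok N L i' j' \<rho>'"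
        unfolding tok_def size_filter_swap[OF y]
        using c1[of "\<lambda>a b. a = i' \<and> b = j'"] c2[of "\<lambda>a b. a = j' \<and> b = i'"]
          c3[of "\<lambda>a b. a = i' \<and> b = j'"] c4[of "\<lambda>a b. a = j' \<and> b = i'"]
        by simp
      thus "tok ?N' L i' j' \<rho>' \<le> 1" using E(12) unfolding c_tok_def by simp
    qed
    show "c_einv L' Ob" using T(7)[OF E(13)] .
    show "c_einvu Ob" using E(14) .
    show "c_eres L' Ob" using T(8)[OF E(15)] .
    show "c_oupd L' Ob" using T(9)[OF E(16)] .
    show "c_oupdu Ob" using E(17) .
    show "c_i1 n ?G' Ob" by (rule i1_mono[OF E(18) subset_insertI])
    show "c_i2 n ?G' Ob" by (rule i2_mono[OF E(19) subset_insertI])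
  qed
qed

definition base :: "(pid \<Rightarrow> lstate) \<Rightarrow> (pid \<Rightarrow> lstate) \<Rightarrow> bool" where
  "base L L' \<longleftrightarrow> (\<forall>p. rid (L' p) = rid (L p) \<and> busy (L' p) = busy (L p) \<and> opc (L' p) = opc (L p) \<and>
     curop (L' p) = curop (L p) \<and> rreg (L' p) = rreg (L p) \<and> lt (L p) \<le> lt (L' p))"

lemma base_transfer:
  assumes "base L L'"
  shows "uph Ob L' = uph Ob L" "qph Ob L' = qph Ob L"
    "c_gs L G Ob \<Longrightarrow> c_gs L' G Ob" "c_gsq L G Ob \<Longrightarrow> c_gsq L' G Ob"
    "c_einv L Ob \<Longrightarrow> c_einv L' Ob" "c_eres L Ob \<Longrightarrow> c_eres L' Ob" "c_oupd L Ob \<Longrightarrow> c_oupd L' Ob"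
    "c_gq n L G \<Longrightarrow> c_gq n L' G"
    "c_gu n L G \<Longrightarrow> (\<forall>p. tvps (L' p) = tvps (L p)) \<Longrightarrow> c_gu n L' G"
proof -
  have e: "\<And>p. rid (L' p) = rid (L p) \<and> busy (L' p) = busy (L p) \<and> opc (L' p) = opc (L p) \<and>
     curop (L' p) = curop (L p) \<and> rreg (L' p) = rreg (L p) \<and> lt (L p) \<le> lt (L' p)"
    using assms unfolding base_def by blast
  show u: "uph Ob L' = uph Ob L" unfolding uph_def by (rule ext) (simp add: e)
  show q: "qph Ob L' = qph Ob L" unfolding qph_def by (rule ext) (simp add: e)
  show "c_gs L G Ob \<Longrightarrow> c_gs L' G Ob" unfolding c_gs_def u by (simp add: e)
  show "c_gsq L G Ob \<Longrightarrow> c_gsq L' G Ob" unfolding c_gsq_def q by (simp add: e)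
  show "c_einv L Ob \<Longrightarrow> c_einv L' Ob" unfolding c_einv_def by (simp add: e)
  show "c_eres L Ob \<Longrightarrow> c_eres L' Ob" unfolding c_eres_def by (simp add: e)
  show "c_oupd L Ob \<Longrightarrow> c_oupd L' Ob" unfolding c_oupd_def by (simp add: e)
  show "c_gq n L G \<Longrightarrow> c_gq n L' G" unfolding c_gq_def using e by (meson order_trans)
  show "c_gu n L G \<Longrightarrow> (\<forall>p. tvps (L' p) = tvps (L p)) \<Longrightarrow> c_gu n L' G"
  proof -
    assume h: "c_gu n L G" and tv: "\<forall>p. tvps (L' p) = tvps (L p)"
    show "c_gu n L' G" unfolding c_gu_def
    proof (intro allI impI)
      fix p a r tsv assume "GU p a r tsv \<in> G"
      note o = h[unfolded c_gu_def, rule_format, OF this]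
      show "p \<in> {1..n} \<and> a \<le> lt (L' p) \<and> tsv \<le> tvps (L' p) r"
        using o e[of p] tv by auto
    qed
  qed
qed

lemma base_acks:
  assumes "base L L'" "\<forall>p. acks (L' p) = acks (L p)" "c_acks L G Ob"
  shows "c_acks L' G Ob"
proof -
  have e: "\<And>p. rid (L' p) = rid (L p) \<and> busy (L' p) = busy (L p) \<and> opc (L' p) = opc (L p) \<and>
     curop (L' p) = curop (L p) \<and> rreg (L' p) = rreg (L p) \<and> lt (L p) \<le> lt (L' p)"
    using assms unfolding base_def by blast
  have same: "same_ctl (\<lambda>p. (L p)\<lparr>qresps := qresps (L' p)\<rparr>) L'" unfolding same_ctl_def using e assms(2) by simp
  have "c_acks (\<lambda>p. (L p)\<lparr>qresps := qresps (L' p)\<rparr>) G Ob"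
    using assms(3) unfolding c_acks_def uph_def by simp
  thus ?thesis by (rule ctl_transfer(5)[OF same])
qed

lemma base_q:
  assumes "base L L'" "\<forall>p. qresps (L' p) = qresps (L p)" "c_q L G Ob"
  shows "c_q L' G Ob" "tok N L' = tok N L"
proof -
  have e: "\<And>p. rid (L' p) = rid (L p) \<and> busy (L' p) = busy (L p) \<and> opc (L' p) = opc (L p) \<and>
     curop (L' p) = curop (L p) \<and> rreg (L' p) = rreg (L p) \<and> lt (L p) \<le> lt (L' p)"
    using assms unfolding base_def by blast
  have same: "same_ctl (\<lambda>p. (L p)\<lparr>acks := acks (L' p)\<rparr>) L'" unfolding same_ctl_def using e assms(2) by simp
  have "c_q (\<lambda>p. (L p)\<lparr>acks := acks (L' p)\<rparr>) G Ob"
    using assms(3) unfolding c_q_def qph_def by simp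
  thus "c_q L' G Ob" by (rule ctl_transfer(6)[OF same])
  have "tok N L' = tok N (\<lambda>p. (L p)\<lparr>acks := acks (L' p)\<rparr>)" by (rule ctl_transfer(10)[OF same])
  also have "\<dots> = tok N L" unfolding tok_def by simp
  finally show "tok N L' = tok N L" .
qed

lemma inv_resp_nf:
  assumes I: "InvNL n N L G Ob" and y: "(j,i,Response q \<rho> v) \<in># N" and m: "rid (L i) = \<rho>"
  defines "t' \<equiv> max (lt (L i)) q + 1"
  defines "L' \<equiv> L(i := (L i)\<lparr>lt := t', qresps := qresps (L i) \<union> {(v,j)}\<rparr>)"
  shows "InvNL n (N - {#(j,i,Response q \<rho> v)#}) L' G Ob"
proof -
  note E = inv_extract[OF I]
  note E0 = inv_extract[OF inv_remove[OF I y]]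
  let ?N' = "N - {#(j,i,Response q \<rho> v)#}"
  obtain r bt where gq: "GQ j q r v \<in> G" and gsq: "GSQ i \<rho> r bt \<in> G" and btq: "bt < q"
    using E(3) y unfolding c_mr_def by blast
  have qi: "qph Ob L i" "curop (L i) = Rd r" "OEv (EInv i (opc (L i)) (Rd r) bt) \<in> Ob"
    using E(9)[unfolded c_gsq_def, rule_format, OF gsq] m by auto
  have notin: "j \<notin> snd ` qresps (L i)"
  proof
    assume jin: "j \<in> snd ` qresps (L i)"
    have "1 \<le> size (filter_mset (\<lambda>(a,b,m). a = j \<and> b = i \<and> isR \<rho> m) N)"
      by (rule size_filter_pos[OF y]) simp
    hence "tok N L i j \<rho> \<ge> 2" unfolding tok_def using jin m by simp
    moreover have "tok N L i j \<rho> \<le> 1" using E(12) unfolding c_tok_def by blast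
    ultimately show False by linarith
  qed
  have L'i: "L' i = (L i)\<lparr>lt := t', qresps := qresps (L i) \<union> {(v,j)}\<rparr>" unfolding L'_def by simp
  have L'o: "\<And>p. p \<noteq> i \<Longrightarrow> L' p = L p" unfolding L'_def by simp
  have b: "base L L'" unfolding base_def L'_def t'_def by auto
  note T = base_transfer[OF b]
  have tv: "\<forall>p. tvps (L' p) = tvps (L p)" unfolding L'_def by auto
  have ak: "\<forall>p. acks (L' p) = acks (L p)" unfolding L'_def by auto
  show ?thesis unfolding InvNL_def
  proof (intro conjI)
    show "c_mq n ?N' G" using E0(1) .
    show "c_mu n ?N' G" using E0(2) .
    show "c_mr ?N' G" using E0(3) .
    show "c_ma ?N' G" using E0(4) .
    show "c_gu n L' G" using T(9)[OF E(5) tv] .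
    show "c_gq n L' G" using T(8)[OF E(6)] .
    show "c_guq G" using E(7) .
    show "c_gs L' G Ob" using T(3)[OF E(8)] .
    show "c_gsq L' G Ob" using T(4)[OF E(9)] .
    show "c_acks L' G Ob" using base_acks[OF b ak E(10)] .
    show "c_q L' G Ob" unfolding c_q_def
    proof (intro allI)
      fix p
      show "(\<not> qph Ob L' p \<longrightarrow> qresps (L' p) = {}) \<and> inj_on snd (qresps (L' p)) \<and>
        (\<forall>v j. (v,j)\<in>qresps (L' p) \<longrightarrow> (\<exists>q r bt. GQ j q r v \<in> G \<and> curop (L' p) = Rd r \<and> OEv (EInv p (opc (L' p)) (Rd r) bt) \<in> Ob \<and> bt < q))"
      proof (cases "p = i")
        case False
        thus ?thesis using E(11)[unfolded c_q_def, rule_format, of p] T(2) by (simp add: L'o)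
      next
        case True
        have inj: "inj_on snd (qresps (L i))" using E(11) unfolding c_q_def by blast
        have el: "\<forall>v j. (v,j)\<in>qresps (L i) \<longrightarrow> (\<exists>q r bt. GQ j q r v \<in> G \<and> curop (L i) = Rd r \<and> OEv (EInv i (opc (L i)) (Rd r) bt) \<in> Ob \<and> bt < q)"
          using E(11) unfolding c_q_def by blast
        have "inj_on snd (qresps (L i) \<union> {(v,j)})" using inj notin by (auto simp: inj_on_def image_iff)
        moreover have "\<forall>v' j'. (v',j')\<in>qresps (L i) \<union> {(v,j)} \<longrightarrow> (\<exists>q r bt. GQ j' q r v' \<in> G \<and> curop (L i) = Rd r \<and> OEv (EInv i (opc (L i)) (Rd r) bt) \<in> Ob \<and> bt < q)"
        proof (intro allI impI)
          fix v' j' assume "(v',j') \<in> qresps (L i) \<union> {(v,j)}"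
          thus "\<exists>q r bt. GQ j' q r v' \<in> G \<and> curop (L i) = Rd r \<and> OEv (EInv i (opc (L i)) (Rd r) bt) \<in> Ob \<and> bt < q"
          proof
            assume "(v',j') \<in> qresps (L i)" thus ?thesis using el by blast
          next
            assume "(v',j') \<in> {(v,j)}"
            hence "v' = v" "j' = j" by auto
            thus ?thesis using gq qi btq by blast
          qed
        qed
        ultimately show ?thesis using True qi(1) T(2) by (simp add: L'i)
      qed
    qed
    show "c_tok ?N' L'" unfolding c_tok_def
    proof (intro allI)
      fix i' j' \<rho>'
      have old: "tok N L i' j' \<rho>' \<le> 1" using E(12) unfolding c_tok_def by blast
      have s1: "size (filter_mset (\<lambda>(a,b,m). a = i' \<and> b = j' \<and> isQ \<rho>' m) ?N') \<le>
                size (filter_mset (\<lambda>(a,b,m). a = i' \<and> b = j' \<and> isQ \<rho>' m) N)" by (rule size_filter_diff_le)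
      have s2: "size (filter_mset (\<lambda>(a,b,m). a = j' \<and> b = i' \<and> isR \<rho>' m) ?N') =
                size (filter_mset (\<lambda>(a,b,m). a = j' \<and> b = i' \<and> isR \<rho>' m) N) - (if i' = i \<and> j' = j \<and> \<rho>' = \<rho> then 1 else 0)"
        using size_filter_diff[OF y, of "\<lambda>(a,b,m). a = j' \<and> b = i' \<and> isR \<rho>' m"] by auto
      have s3: "(if i' = i \<and> j' = j \<and> \<rho>' = \<rho> then 1 else 0) \<le> size (filter_mset (\<lambda>(a,b,m). a = j' \<and> b = i' \<and> isR \<rho>' m) N)"
        using size_filter_pos[OF y, of "\<lambda>(a,b,m). a = j' \<and> b = i' \<and> isR \<rho>' m"] by auto
      have s4: "(if \<rho>' = rid (L' i') \<and> j' \<in> snd ` qresps (L' i') then 1 else 0) \<le>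
                (if \<rho>' = rid (L i') \<and> j' \<in> snd ` qresps (L i') then 1 else 0) + (if i' = i \<and> j' = j \<and> \<rho>' = \<rho> then 1 else (0::nat))"
        by (cases "i' = i") (auto simp: L'i L'o m)
      show "tok ?N' L' i' j' \<rho>' \<le> 1" using old s1 s2 s3 s4 unfolding tok_def by linarith
    qed
    show "c_einv L' Ob" using T(5)[OF E(13)] .
    show "c_einvu Ob" using E(14) .
    show "c_eres L' Ob" using T(6)[OF E(15)] .
    show "c_oupd L' Ob" using T(7)[OF E(16)] .
    show "c_oupdu Ob" using E(17) .
    show "c_i1 n G Ob" using E(18) .
    show "c_i2 n G Ob" using E(19) .
  qed
qed

lemma inv_ack_nf:
  assumes I: "InvNL n N L G Ob" and y: "(j,i,Ack at \<rho>) \<in># N" and m: "rid (L i) = \<rho>"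
  defines "t' \<equiv> max (lt (L i)) at + 1"
  defines "L' \<equiv> L(i := (L i)\<lparr>lt := t', acks := acks (L i) \<union> {j}\<rparr>)"
  shows "InvNL n (N - {#(j,i,Ack at \<rho>)#}) L' G Ob"
proof -
  note E = inv_extract[OF I]
  note E0 = inv_extract[OF inv_remove[OF I y]]
  let ?N' = "N - {#(j,i,Ack at \<rho>)#}"
  obtain r tsv where gu: "GU j at r tsv \<in> G" and gs: "GS i \<rho> r tsv \<in> G"
    using E(4) y unfolding c_ma_def by blast
  have ui: "uph Ob L i" "r = op_reg (curop (L i))" "OUpd i (opc (L i)) tsv \<in> Ob"
    using E(8)[unfolded c_gs_def, rule_format, OF gs] m by auto
  have L'i: "L' i = (L i)\<lparr>lt := t', acks := acks (L i) \<union> {j}\<rparr>" unfolding L'_def by simp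
  have L'o: "\<And>p. p \<noteq> i \<Longrightarrow> L' p = L p" unfolding L'_def by simp
  have b: "base L L'" unfolding base_def L'_def t'_def by auto
  note T = base_transfer[OF b]
  have tv: "\<forall>p. tvps (L' p) = tvps (L p)" unfolding L'_def by auto
  have qr: "\<forall>p. qresps (L' p) = qresps (L p)" unfolding L'_def by auto
  show ?thesis unfolding InvNL_def
  proof (intro conjI)
    show "c_mq n ?N' G" using E0(1) .
    show "c_mu n ?N' G" using E0(2) .
    show "c_mr ?N' G" using E0(3) .
    show "c_ma ?N' G" using E0(4) .
    show "c_gu n L' G" using T(9)[OF E(5) tv] .
    show "c_gq n L' G" using T(8)[OF E(6)] .
    show "c_guq G" using E(7) .
    show "c_gs L' G Ob" using T(3)[OF E(8)] .
    show "c_gsq L' G Ob" using T(4)[OF E(9)] .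
    show "c_acks L' G Ob" unfolding c_acks_def
    proof (intro allI)
      fix p
      show "(\<not> uph Ob L' p \<longrightarrow> acks (L' p) = {}) \<and>
        (\<forall>j\<in>acks (L' p). \<exists>a tsv. a < lt (L' p) \<and> OUpd p (opc (L' p)) tsv \<in> Ob \<and> GU j a (op_reg (curop (L' p))) tsv \<in> G)"
      proof (cases "p = i")
        case False
        thus ?thesis using E(10)[unfolded c_acks_def, rule_format, of p] T(1) by (simp add: L'o)
      next
        case True
        have el: "\<forall>j\<in>acks (L i). \<exists>a tsv. a < lt (L i) \<and> OUpd i (opc (L i)) tsv \<in> Ob \<and> GU j a (op_reg (curop (L i))) tsv \<in> G"
          using E(10) unfolding c_acks_def by blast
        have "\<forall>j'\<in>acks (L i) \<union> {j}. \<exists>a tsv. a < t' \<and> OUpd i (opc (L i)) tsv \<in> Ob \<and> GU j' a (op_reg (curop (L i))) tsv \<in> G"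
        proof
          fix j' assume "j' \<in> acks (L i) \<union> {j}"
          thus "\<exists>a tsv. a < t' \<and> OUpd i (opc (L i)) tsv \<in> Ob \<and> GU j' a (op_reg (curop (L i))) tsv \<in> G"
          proof
            assume "j' \<in> acks (L i)"
            then obtain a tsv' where "a < lt (L i)" "OUpd i (opc (L i)) tsv' \<in> Ob" "GU j' a (op_reg (curop (L i))) tsv' \<in> G"
              using el by blast
            moreover have "lt (L i) < t'" unfolding t'_def by simp
            ultimately show ?thesis by (meson order.strict_trans)
          next
            assume "j' \<in> {j}"
            hence "j' = j" by simp
            moreover have "at < t'" unfolding t'_def by simp
            ultimately show ?thesis using gu ui by blast
          qed
        qed
        thus ?thesis using True ui(1) T(1) by (simp add: L'i)
      qed
    qed
    show "c_q L' G Ob" using base_q(1)[OF b qr E(11)] .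
    show "c_tok ?N' L'" unfolding c_tok_def base_q(2)[OF b qr E(11)]
      using E(12) tok_diff_le unfolding c_tok_def by (meson le_trans)
    show "c_einv L' Ob" using T(5)[OF E(13)] .
    show "c_einvu Ob" using E(14) .
    show "c_eres L' Ob" using T(6)[OF E(15)] .
    show "c_oupd L' Ob" using T(7)[OF E(16)] .
    show "c_oupdu Ob" using E(17) .
    show "c_i1 n G Ob" using E(18) .
    show "c_i2 n G Ob" using E(19) .
  qed
qed

lemma size_filter_zero: "(\<And>x. x \<in># N \<Longrightarrow> \<not> P x) \<Longrightarrow> size (filter_mset P N) = 0"
  by simp

lemma inv_resp_full:
  assumes I: "InvNL n N L G Ob" and y: "(j,i,Response q \<rho> v) \<in># N" and m: "rid (L i) = \<rho>"
    and full: "card (qresps (L i) \<union> {(v,j)}) = maj n"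
  defines "t' \<equiv> max (lt (L i)) q + 1" and "M \<equiv> Max (fst ` (qresps (L i) \<union> {(v,j)}))"
  defines "L' \<equiv> L(i := (L i)\<lparr>lt := t', qresps := {}, rval := snd M, rid := rid (L i) + 1\<rparr>)"
  defines "N' \<equiv> N - {#(j,i,Response q \<rho> v)#} + bcast n i (Update t' (rid (L i) + 1) (rreg (L i)) M)"
  defines "G' \<equiv> insert (GS i (rid (L i) + 1) (rreg (L i)) M) G"
  defines "Ob' \<equiv> Ob \<union> {OUpd i (opc (L i)) M}"
  shows "InvNL n N' L' G' Ob'"
proof -
  note E = inv_extract[OF I]
  let ?R = "qresps (L i) \<union> {(v,j)}"
  obtain r bt where gq: "GQ j q r v \<in> G" and gsq: "GSQ i \<rho> r bt \<in> G" and btq: "bt < q"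
    using E(3) y unfolding c_mr_def by blast
  have qi: "qph Ob L i" "curop (L i) = Rd r" "rreg (L i) = r" "OEv (EInv i (opc (L i)) (Rd r) bt) \<in> Ob"
    using E(9)[unfolded c_gsq_def, rule_format, OF gsq] m by auto
  have notin: "j \<notin> snd ` qresps (L i)"
  proof
    assume jin: "j \<in> snd ` qresps (L i)"
    have "1 \<le> size (filter_mset (\<lambda>(a,b,m). a = j \<and> b = i \<and> isR \<rho> m) N)"
      by (rule size_filter_pos[OF y]) simp
    hence "tok N L i j \<rho> \<ge> 2" unfolding tok_def using jin m by simp
    moreover have "tok N L i j \<rho> \<le> 1" using E(12) unfolding c_tok_def by blast
    ultimately show False by linarith
  qed
  have L'i: "L' i = (L i)\<lparr>lt := t', qresps := {}, rval := snd M, rid := rid (L i) + 1\<rparr>" unfolding L'_def by simp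
  have L'o: "\<And>p. p \<noteq> i \<Longrightarrow> L' p = L p" unfolding L'_def by simp
  have noupd: "\<And>tsv. OUpd i (opc (L i)) tsv \<notin> Ob" using qi(1) unfolding qph_def by blast
  have busyi: "busy (L i)" using qi(1) unfolding qph_def by blast
  have uphi: "uph Ob' L' i"
  proof -
    have "OUpd i (opc (L' i)) M \<in> Ob'" unfolding Ob'_def by (simp add: L'i)
    moreover have "busy (L' i)" using busyi by (simp add: L'i)
    ultimately show ?thesis unfolding uph_def by blast
  qed
  have nqphi: "\<not> qph Ob' L' i"
  proof -
    have "OUpd i (opc (L' i)) M \<in> Ob'" unfolding Ob'_def by (simp add: L'i)
    thus ?thesis unfolding qph_def by blast
  qed
  have uph_other: "\<And>p. p \<noteq> i \<Longrightarrow> uph Ob' L' p = uph Ob L p"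
    unfolding uph_def Ob'_def using L'o by auto
  have qph_other: "\<And>p. p \<noteq> i \<Longrightarrow> qph Ob' L' p = qph Ob L p"
    unfolding qph_def Ob'_def using L'o by auto
  have acks0: "acks (L i) = {}" using E(10) qi(1) unfolding c_acks_def uph_def qph_def by auto
  have gsq_le: "\<And>\<rho>' r' bt. GSQ i \<rho>' r' bt \<in> G \<Longrightarrow> \<rho>' \<le> \<rho>" using E(9) m unfolding c_gsq_def by fastforce
  have gs_le: "\<And>\<rho>' r' tsv. GS i \<rho>' r' tsv \<in> G \<Longrightarrow> \<rho>' \<le> \<rho>" using E(8) m unfolding c_gs_def by fastforce
  have sub: "\<And>x. x \<in># N - {#(j,i,Response q \<rho> v)#} \<Longrightarrow> x \<in># N" by (rule in_diffD)
  have inj: "inj_on snd ?R"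
  proof -
    have "inj_on snd (qresps (L i))" using E(11) unfolding c_q_def by blast
    thus ?thesis using notin by (auto simp: inj_on_def image_iff)
  qed
  have el: "\<And>v' j'. (v',j') \<in> ?R \<Longrightarrow> \<exists>q'. GQ j' q' r v' \<in> G \<and> bt < q'"
  proof -
    fix v' j' assume "(v',j') \<in> ?R"
    thus "\<exists>q'. GQ j' q' r v' \<in> G \<and> bt < q'"
    proof
      assume "(v',j') \<in> qresps (L i)"
      then obtain q' r' bt' where h: "GQ j' q' r' v' \<in> G" "curop (L i) = Rd r'" "OEv (EInv i (opc (L i)) (Rd r') bt') \<in> Ob" "bt' < q'"
        using E(11) unfolding c_q_def by blast
      have "r' = r" using h(2) qi(2) by simp
      moreover have "bt' = bt" using E(14)[unfolded c_einvu_def, rule_format, OF h(3) qi(4)] by simp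
      ultimately show ?thesis using h by blast
    next
      assume "(v',j') \<in> {(v,j)}"
      thus ?thesis using gq btq by auto
    qed
  qed
  have Rsub: "snd ` ?R \<subseteq> {1..n}"
  proof
    fix x assume "x \<in> snd ` ?R"
    then obtain yy where "yy \<in> ?R" "x = snd yy" by blast
    hence "(fst yy, x) \<in> ?R" by simp
    then obtain v' where "(v',x) \<in> ?R" by blast
    then obtain q' where "GQ x q' r v' \<in> G" using el by blast
    thus "x \<in> {1..n}" using E(6) unfolding c_gq_def by blast
  qed
  have finR: "finite ?R" using Rsub inj finite_subset[OF Rsub] finite_imageD by blast
  have cardR: "card (snd ` ?R) = maj n" using card_image[OF inj] full by simp
  have leM: "\<And>v' j'. (v',j') \<in> ?R \<Longrightarrow> v' \<le> M" unfolding M_def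
    using finR by (metis Max_ge finite_imageI fst_conv image_eqI)
  show ?thesis unfolding InvNL_def
  proof (intro conjI)
    show "c_mq n N' G'" unfolding c_mq_def N'_def G'_def
      using E(1) unfolding c_mq_def by (auto simp: mem_bcast dest: in_diffD)
    show "c_mu n N' G'" unfolding c_mu_def
    proof (intro allI impI)
      fix a b at' \<rho>' r' tsv assume "(a,b,Update at' \<rho>' r' tsv) \<in># N'"
      hence "(a,b,Update at' \<rho>' r' tsv) \<in># N \<or> (a = i \<and> b \<in> {1..n} \<and> \<rho>' = rid (L i) + 1 \<and> r' = rreg (L i) \<and> tsv = M)"
        unfolding N'_def by (auto simp: mem_bcast dest: in_diffD)
      thus "b \<in> {1..n} \<and> GS a \<rho>' r' tsv \<in> G'"
      proof
        assume "(a,b,Update at' \<rho>' r' tsv) \<in># N"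
        thus ?thesis using E(2) unfolding c_mu_def G'_def by blast
      qed (auto simp: G'_def)
    qed
    show "c_mr N' G'" unfolding c_mr_def
    proof (intro allI impI)
      fix a b q' \<rho>' v' assume "(a,b,Response q' \<rho>' v') \<in># N'"
      hence "(a,b,Response q' \<rho>' v') \<in># N" unfolding N'_def by (auto simp: mem_bcast dest: in_diffD)
      then obtain r' bt' where "GQ a q' r' v' \<in> G" "GSQ b \<rho>' r' bt' \<in> G" "bt' < q'"
        using E(3) unfolding c_mr_def by blast
      thus "\<exists>rr bb. GQ a q' rr v' \<in> G' \<and> GSQ b \<rho>' rr bb \<in> G' \<and> bb < q'" unfolding G'_def by blast
    qed
    show "c_ma N' G'" unfolding c_ma_def
    proof (intro allI impI)
      fix a b at' \<rho>' assume "(a,b,Ack at' \<rho>') \<in># N'"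
      hence "(a,b,Ack at' \<rho>') \<in># N" unfolding N'_def by (auto simp: mem_bcast dest: in_diffD)
      then obtain r' tsv where "GU a at' r' tsv \<in> G" "GS b \<rho>' r' tsv \<in> G"
        using E(4) unfolding c_ma_def by blast
      thus "\<exists>rr tt. GU a at' rr tt \<in> G' \<and> GS b \<rho>' rr tt \<in> G'" unfolding G'_def by blast
    qed
    show "c_gu n L' G'" unfolding c_gu_def
    proof (intro allI impI)
      fix p a r' tsv assume "GU p a r' tsv \<in> G'"
      hence "GU p a r' tsv \<in> G" unfolding G'_def by simp
      note o = E(5)[unfolded c_gu_def, rule_format, OF this]
      show "p \<in> {1..n} \<and> a \<le> lt (L' p) \<and> tsv \<le> tvps (L' p) r'"
        using o by (cases "p = i") (auto simp: L'i L'o t'_def)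
    qed
    show "c_gq n L' G'" unfolding c_gq_def
    proof (intro allI impI)
      fix p q' r' v' assume "GQ p q' r' v' \<in> G'"
      hence "GQ p q' r' v' \<in> G" unfolding G'_def by simp
      note o = E(6)[unfolded c_gq_def, rule_format, OF this]
      show "p \<in> {1..n} \<and> q' \<le> lt (L' p)"
        using o by (cases "p = i") (auto simp: L'i L'o t'_def)
    qed
    show "c_guq G'" using E(7) unfolding c_guq_def G'_def by simp
    show "c_gs L' G' Ob'" unfolding c_gs_def
    proof (intro allI impI)
      fix p \<rho>' r' tsv assume h: "GS p \<rho>' r' tsv \<in> G'"
      show "\<rho>' \<le> rid (L' p) \<and> (\<rho>' = rid (L' p) \<longrightarrow> uph Ob' L' p \<and> r' = op_reg (curop (L' p)) \<and> OUpd p (opc (L' p)) tsv \<in> Ob')"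
      proof (cases "GS p \<rho>' r' tsv \<in> G")
        case True
        note o = E(8)[unfolded c_gs_def, rule_format, OF True]
        show ?thesis
        proof (cases "p = i")
          case True
          thus ?thesis using gs_le[of \<rho>' r' tsv] \<open>GS p \<rho>' r' tsv \<in> G\<close> m by (simp add: L'i)
        next
          case False
          thus ?thesis using o uph_other[OF False] by (auto simp: L'o Ob'_def)
        qed
      next
        case False
        hence "p = i" "\<rho>' = rid (L i) + 1" "r' = rreg (L i)" "tsv = M" using h unfolding G'_def by auto
        thus ?thesis using uphi qi by (simp add: L'i Ob'_def)
      qed
    qed
    show "c_gsq L' G' Ob'" unfolding c_gsq_def
    proof (intro allI impI)
      fix p \<rho>' r' bt' assume h: "GSQ p \<rho>' r' bt' \<in> G'"
      hence g: "GSQ p \<rho>' r' bt' \<in> G" unfolding G'_def by simp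
      note o = E(9)[unfolded c_gsq_def, rule_format, OF g]
      show "\<rho>' \<le> rid (L' p) \<and> (\<rho>' = rid (L' p) \<longrightarrow> qph Ob' L' p \<and> curop (L' p) = Rd r' \<and> rreg (L' p) = r' \<and> OEv (EInv p (opc (L' p)) (Rd r') bt') \<in> Ob')"
      proof (cases "p = i")
        case True
        thus ?thesis using gsq_le[of \<rho>' r' bt'] g m by (simp add: L'i)
      next
        case False
        thus ?thesis using o qph_other[OF False] by (auto simp: L'o Ob'_def)
      qed
    qed
    show "c_acks L' G' Ob'" unfolding c_acks_def
    proof (intro allI)
      fix p
      show "(\<not> uph Ob' L' p \<longrightarrow> acks (L' p) = {}) \<and>
        (\<forall>j\<in>acks (L' p). \<exists>a tsv. a < lt (L' p) \<and> OUpd p (opc (L' p)) tsv \<in> Ob' \<and> GU j a (op_reg (curop (L' p))) tsv \<in> G')"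
      proof (cases "p = i")
        case True thus ?thesis using acks0 by (simp add: L'i)
      next
        case False
        have o: "(\<not> uph Ob L p \<longrightarrow> acks (L p) = {}) \<and>
          (\<forall>j\<in>acks (L p). \<exists>a tsv. a < lt (L p) \<and> OUpd p (opc (L p)) tsv \<in> Ob \<and> GU j a (op_reg (curop (L p))) tsv \<in> G)"
          using E(10) unfolding c_acks_def by blast
        show ?thesis unfolding uph_other[OF False] L'o[OF False]
        proof (intro conjI impI ballI)
          assume "\<not> uph Ob L p" thus "acks (L p) = {}" using o by blast
        next
          fix j' assume "j' \<in> acks (L p)"
          then obtain a tsv where "a < lt (L p)" "OUpd p (opc (L p)) tsv \<in> Ob" "GU j' a (op_reg (curop (L p))) tsv \<in> G"
            using o by blast
          thus "\<exists>a tsv. a < lt (L p) \<and> OUpd p (opc (L p)) tsv \<in> Ob' \<and> GU j' a (op_reg (curop (L p))) tsv \<in> G'"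
            unfolding Ob'_def G'_def by blast
        qed
      qed
    qed
    show "c_q L' G' Ob'" unfolding c_q_def
    proof (intro allI)
      fix p
      show "(\<not> qph Ob' L' p \<longrightarrow> qresps (L' p) = {}) \<and> inj_on snd (qresps (L' p)) \<and>
        (\<forall>v j. (v,j)\<in>qresps (L' p) \<longrightarrow> (\<exists>q r bt. GQ j q r v \<in> G' \<and> curop (L' p) = Rd r \<and> OEv (EInv p (opc (L' p)) (Rd r) bt) \<in> Ob' \<and> bt < q))"
      proof (cases "p = i")
        case True thus ?thesis by (simp add: L'i)
      next
        case False
        have o: "(\<not> qph Ob L p \<longrightarrow> qresps (L p) = {}) \<and> inj_on snd (qresps (L p)) \<and>
          (\<forall>v j. (v,j)\<in>qresps (L p) \<longrightarrow> (\<exists>q r bt. GQ j q r v \<in> G \<and> curop (L p) = Rd r \<and> OEv (EInv p (opc (L p)) (Rd r) bt) \<in> Ob \<and> bt < q))"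
          using E(11) unfolding c_q_def by blast
        show ?thesis unfolding qph_other[OF False] L'o[OF False]
        proof (intro conjI impI allI)
          assume "\<not> qph Ob L p" thus "qresps (L p) = {}" using o by blast
        next
          show "inj_on snd (qresps (L p))" using o by blast
        next
          fix v' j' assume "(v', j') \<in> qresps (L p)"
          then obtain q' r' bt' where "GQ j' q' r' v' \<in> G" "curop (L p) = Rd r'" "OEv (EInv p (opc (L p)) (Rd r') bt') \<in> Ob" "bt' < q'"
            using o by blast
          thus "\<exists>q r bt. GQ j' q r v' \<in> G' \<and> curop (L p) = Rd r \<and> OEv (EInv p (opc (L p)) (Rd r) bt) \<in> Ob' \<and> bt < q"
            unfolding Ob'_def G'_def by blast
        qed
      qed
    qed
    show "c_tok N' L'" unfolding c_tok_def
    proof (intro allI)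
      fix i' j' \<rho>'
      let ?N0 = "N - {#(j,i,Response q \<rho> v)#}"
      let ?B = "bcast n i (Update t' (rid (L i) + 1) (rreg (L i)) M)"
      have old: "tok N L i' j' \<rho>' \<le> 1" using E(12) unfolding c_tok_def by blast
      have sb: "size (filter_mset (\<lambda>(a,b,m). a = i' \<and> b = j' \<and> isQ \<rho>' m) ?B) = 0"
        using size_bcast[of i' j' "isQ \<rho>'"] by auto
      have sb2: "size (filter_mset (\<lambda>(a,b,m). a = j' \<and> b = i' \<and> isR \<rho>' m) ?B) = 0"
        using size_bcast[of j' i' "isR \<rho>'"] by auto
      have s1: "size (filter_mset (\<lambda>(a,b,m). a = i' \<and> b = j' \<and> isQ \<rho>' m) ?N0) \<le>
                size (filter_mset (\<lambda>(a,b,m). a = i' \<and> b = j' \<and> isQ \<rho>' m) N)" by (rule size_filter_diff_le)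
      have s2: "size (filter_mset (\<lambda>(a,b,m). a = j' \<and> b = i' \<and> isR \<rho>' m) ?N0) \<le>
                size (filter_mset (\<lambda>(a,b,m). a = j' \<and> b = i' \<and> isR \<rho>' m) N)" by (rule size_filter_diff_le)
      show "tok N' L' i' j' \<rho>' \<le> 1"
      proof (cases "i' = i")
        case False
        thus ?thesis using old s1 s2 unfolding tok_def N'_def filter_union_mset size_union sb sb2 by (simp add: L'o)
      next
        case True
        show ?thesis
        proof (cases "\<rho>' = rid (L i) + 1")
          case False
          thus ?thesis using old s1 s2 \<open>i' = i\<close> unfolding tok_def N'_def filter_union_mset size_union sb sb2 by (simp add: L'i)
        next
          case r1: True
          have z1: "size (filter_mset (\<lambda>(a,b,m). a = i' \<and> b = j' \<and> isQ \<rho>' m) N) = 0"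
          proof (rule size_filter_zero)
            fix x assume "x \<in># N"
            then obtain a b mm where x: "x = (a,b,mm)" "(a,b,mm) \<in># N" by (cases x) auto
            show "\<not> (\<lambda>(a,b,m). a = i' \<and> b = j' \<and> isQ \<rho>' m) x"
            proof
              assume "(\<lambda>(a,b,m). a = i' \<and> b = j' \<and> isQ \<rho>' m) x"
              hence "a = i" "isQ \<rho>' mm" using x True by auto
              then obtain bt' r' where "mm = Query bt' \<rho>' r'" by (cases mm) auto
              hence "GSQ i \<rho>' r' bt' \<in> G" using E(1) x \<open>a = i\<close> unfolding c_mq_def by blast
              thus False using gsq_le r1 m by fastforce
            qed
          qed
          have z2: "size (filter_mset (\<lambda>(a,b,m). a = j' \<and> b = i' \<and> isR \<rho>' m) N) = 0"
          proof (rule size_filter_zero)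
            fix x assume "x \<in># N"
            then obtain a b mm where x: "x = (a,b,mm)" "(a,b,mm) \<in># N" by (cases x) auto
            show "\<not> (\<lambda>(a,b,m). a = j' \<and> b = i' \<and> isR \<rho>' m) x"
            proof
              assume "(\<lambda>(a,b,m). a = j' \<and> b = i' \<and> isR \<rho>' m) x"
              hence "b = i" "isR \<rho>' mm" using x True by auto
              then obtain q' v' where "mm = Response q' \<rho>' v'" by (cases mm) auto
              then obtain r' bt' where "GSQ i \<rho>' r' bt' \<in> G" using E(3) x \<open>b = i\<close> unfolding c_mr_def by blast
              thus False using gsq_le r1 m by fastforce
            qed
          qed
          have qt: "(if \<rho>' = rid (L' i') \<and> j' \<in> snd ` qresps (L' i') then 1 else 0) = (0::nat)" by (simp add: L'i True)
          show ?thesis unfolding tok_def N'_def filter_union_mset size_union sb sb2 qt using s1 s2 z1 z2 by linarith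
        qed
      qed
    qed
    show "c_einv L' Ob'" unfolding c_einv_def
    proof (intro allI impI)
      fix p k op t assume "OEv (EInv p k op t) \<in> Ob'"
      hence "OEv (EInv p k op t) \<in> Ob" unfolding Ob'_def by simp
      note o = E(13)[unfolded c_einv_def, rule_format, OF this]
      show "0 < k \<and> k \<le> opc (L' p) \<and> (k = opc (L' p) \<longrightarrow> op = curop (L' p))"
        using o by (cases "p = i") (auto simp: L'i L'o)
    qed
    show "c_einvu Ob'" using E(14) unfolding c_einvu_def Ob'_def by simp
    show "c_eres L' Ob'" unfolding c_eres_def
    proof (intro allI impI)
      fix p k op res t assume "OEv (ERes p k op res t) \<in> Ob'"
      hence "OEv (ERes p k op res t) \<in> Ob" unfolding Ob'_def by simp
      note o = E(15)[unfolded c_eres_def, rule_format, OF this]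
      show "k \<le> opc (L' p) \<and> (k = opc (L' p) \<longrightarrow> \<not> busy (L' p)) \<and> (\<exists>tsv. OUpd p k tsv \<in> Ob')"
        using o unfolding Ob'_def by (cases "p = i") (auto simp: L'i L'o)
    qed
    show "c_oupd L' Ob'" unfolding c_oupd_def
    proof (intro allI impI)
      fix p k tsv assume h: "OUpd p k tsv \<in> Ob'"
      show "k \<le> opc (L' p)"
      proof (cases "OUpd p k tsv \<in> Ob")
        case True thus ?thesis using E(16)[unfolded c_oupd_def, rule_format, OF True] by (cases "p = i") (auto simp: L'i L'o)
      next
        case False thus ?thesis using h unfolding Ob'_def by (auto simp: L'i)
      qed
    qed
    show "c_oupdu Ob'" unfolding c_oupdu_def
    proof (intro allI impI)
      fix p k tsv1 tsv2 assume h1: "OUpd p k tsv1 \<in> Ob'" and h2: "OUpd p k tsv2 \<in> Ob'"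
      show "tsv1 = tsv2"
      proof (cases "OUpd p k tsv1 \<in> Ob \<and> OUpd p k tsv2 \<in> Ob")
        case True thus ?thesis using E(17) unfolding c_oupdu_def by blast
      next
        case False thus ?thesis using h1 h2 noupd[of tsv1] noupd[of tsv2] unfolding Ob'_def by auto
      qed
    qed
    show "c_i1 n G' Ob'" unfolding c_i1_def
    proof (intro allI impI)
      fix p k op res t tsv assume h1: "OEv (ERes p k op res t) \<in> Ob'" and h2: "OUpd p k tsv \<in> Ob'"
      have e1: "OEv (ERes p k op res t) \<in> Ob" using h1 unfolding Ob'_def by simp
      have e2: "OUpd p k tsv \<in> Ob"
      proof (rule ccontr)
        assume "OUpd p k tsv \<notin> Ob"
        hence "p = i" "k = opc (L i)" using h2 unfolding Ob'_def by auto
        thus False using E(15)[unfolded c_eres_def, rule_format, OF e1] busyi by simp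
      qed
      have "c_i1 n G' Ob" unfolding G'_def by (rule i1_mono[OF E(18) subset_insertI])
      from this[unfolded c_i1_def, rule_format, OF e1 e2]
      show "\<exists>A. A \<subseteq> {1..n} \<and> card A = maj n \<and> (\<forall>j\<in>A. \<exists>a<t. GU j a (op_reg op) tsv \<in> G')" .
    qed
    show "c_i2 n G' Ob'" unfolding c_i2_def
    proof (intro allI impI)
      fix p k r' bt' tsv assume h1: "OEv (EInv p k (Rd r') bt') \<in> Ob'" and h2: "OUpd p k tsv \<in> Ob'"
      have e1: "OEv (EInv p k (Rd r') bt') \<in> Ob" using h1 unfolding Ob'_def by simp
      show "\<exists>R. R \<subseteq> {1..n} \<and> card R = maj n \<and> (\<forall>j\<in>R. \<exists>q v. bt' < q \<and> GQ j q r' v \<in> G' \<and> v \<le> tsv)"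
      proof (cases "OUpd p k tsv \<in> Ob")
        case True
        have "c_i2 n G' Ob" unfolding G'_def by (rule i2_mono[OF E(19) subset_insertI])
        from this[unfolded c_i2_def, rule_format, OF e1 True] show ?thesis .
      next
        case False
        hence pk: "p = i" "k = opc (L i)" "tsv = M" using h2 unfolding Ob'_def by auto
        have "Rd r' = Rd r \<and> bt' = bt" using E(14)[unfolded c_einvu_def, rule_format, OF e1[unfolded pk] qi(4)] .
        hence rr: "r' = r" "bt' = bt" by auto
        show ?thesis
        proof (intro exI[of _ "snd ` ?R"] conjI ballI)
          show "snd ` ?R \<subseteq> {1..n}" by (rule Rsub)
          show "card (snd ` ?R) = maj n" by (rule cardR)
        next
          fix x assume "x \<in> snd ` ?R"
          then obtain yy where "yy \<in> ?R" "x = snd yy" by blast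
          hence "(fst yy, x) \<in> ?R" by simp
          then obtain v' where vx: "(v',x) \<in> ?R" by blast
          then obtain q' where "GQ x q' r v' \<in> G" "bt < q'" using el by blast
          thus "\<exists>q v. bt' < q \<and> GQ x q r' v \<in> G' \<and> v \<le> tsv"
            using leM[OF vx] rr pk unfolding G'_def by blast
        qed
      qed
    qed
  qed
qed

lemma inv_ack_full:
  fixes res :: result
  assumes I: "InvNL n N L G Ob" and y: "(j,i,Ack at \<rho>) \<in># N" and m: "rid (L i) = \<rho>"
    and full: "card (acks (L i) \<union> {j}) = maj n"
  defines "t' \<equiv> max (lt (L i)) at + 1"
  defines "L' \<equiv> L(i := (L i)\<lparr>lt := t', acks := {}, rid := rid (L i) + 1, busy := False\<rparr>)"
  defines "Ob' \<equiv> Ob \<union> {OEv (ERes i (opc (L i)) (curop (L i)) res t')}"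
  shows "InvNL n (N - {#(j,i,Ack at \<rho>)#}) L' G Ob'"
proof -
  note E = inv_extract[OF I]
  note E0 = inv_extract[OF inv_remove[OF I y]]
  let ?N' = "N - {#(j,i,Ack at \<rho>)#}"
  let ?A = "acks (L i) \<union> {j}"
  obtain r tsv where gu: "GU j at r tsv \<in> G" and gs: "GS i \<rho> r tsv \<in> G"
    using E(4) y unfolding c_ma_def by blast
  have ui: "uph Ob L i" "r = op_reg (curop (L i))" "OUpd i (opc (L i)) tsv \<in> Ob"
    using E(8)[unfolded c_gs_def, rule_format, OF gs] m by auto
  have L'i: "L' i = (L i)\<lparr>lt := t', acks := {}, rid := rid (L i) + 1, busy := False\<rparr>" unfolding L'_def by simp
  have L'o: "\<And>p. p \<noteq> i \<Longrightarrow> L' p = L p" unfolding L'_def by simp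
  have busyi: "busy (L i)" using ui(1) unfolding uph_def by blast
  have q0: "qresps (L i) = {}" using E(11) ui(1) unfolding c_q_def uph_def qph_def by auto
  have uph_other: "\<And>p. p \<noteq> i \<Longrightarrow> uph Ob' L' p = uph Ob L p"
    unfolding uph_def Ob'_def using L'o by auto
  have qph_other: "\<And>p. p \<noteq> i \<Longrightarrow> qph Ob' L' p = qph Ob L p"
    unfolding qph_def Ob'_def using L'o by auto
  have gsq_le: "\<And>\<rho>' r' bt. GSQ i \<rho>' r' bt \<in> G \<Longrightarrow> \<rho>' \<le> \<rho>" using E(9) m unfolding c_gsq_def by fastforce
  have gs_le: "\<And>\<rho>' r' tsv. GS i \<rho>' r' tsv \<in> G \<Longrightarrow> \<rho>' \<le> \<rho>" using E(8) m unfolding c_gs_def by fastforce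
  have elA: "\<And>j'. j' \<in> ?A \<Longrightarrow> \<exists>a. a < t' \<and> GU j' a (op_reg (curop (L i))) tsv \<in> G"
  proof -
    fix j' assume "j' \<in> ?A"
    thus "\<exists>a. a < t' \<and> GU j' a (op_reg (curop (L i))) tsv \<in> G"
    proof
      assume "j' \<in> acks (L i)"
      then obtain a tsv' where h: "a < lt (L i)" "OUpd i (opc (L i)) tsv' \<in> Ob" "GU j' a (op_reg (curop (L i))) tsv' \<in> G"
        using E(10) unfolding c_acks_def by blast
      have "tsv' = tsv" using E(17)[unfolded c_oupdu_def, rule_format, OF h(2) ui(3)] .
      moreover have "a < t'" using h(1) unfolding t'_def by simp
      ultimately show ?thesis using h(3) by blast
    next
      assume "j' \<in> {j}"
      hence "j' = j" by simp
      moreover have "at < t'" unfolding t'_def by simp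
      ultimately show ?thesis using gu ui(2) by blast
    qed
  qed
  have Asub: "?A \<subseteq> {1..n}"
  proof
    fix x assume "x \<in> ?A"
    then obtain a where "GU x a (op_reg (curop (L i))) tsv \<in> G" using elA by blast
    thus "x \<in> {1..n}" using E(5) unfolding c_gu_def by blast
  qed
  show ?thesis unfolding InvNL_def
  proof (intro conjI)
    show "c_mq n ?N' G" using E0(1) .
    show "c_mu n ?N' G" using E0(2) .
    show "c_mr ?N' G" using E0(3) .
    show "c_ma ?N' G" using E0(4) .
    show "c_gu n L' G" unfolding c_gu_def
    proof (intro allI impI)
      fix p a r' tsv' assume "GU p a r' tsv' \<in> G"
      note o = E(5)[unfolded c_gu_def, rule_format, OF this]
      show "p \<in> {1..n} \<and> a \<le> lt (L' p) \<and> tsv' \<le> tvps (L' p) r'"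
        using o by (cases "p = i") (auto simp: L'i L'o t'_def)
    qed
    show "c_gq n L' G" unfolding c_gq_def
    proof (intro allI impI)
      fix p q' r' v' assume "GQ p q' r' v' \<in> G"
      note o = E(6)[unfolded c_gq_def, rule_format, OF this]
      show "p \<in> {1..n} \<and> q' \<le> lt (L' p)"
        using o by (cases "p = i") (auto simp: L'i L'o t'_def)
    qed
    show "c_guq G" using E(7) .
    show "c_gs L' G Ob'" unfolding c_gs_def
    proof (intro allI impI)
      fix p \<rho>' r' tsv' assume g: "GS p \<rho>' r' tsv' \<in> G"
      note o = E(8)[unfolded c_gs_def, rule_format, OF g]
      show "\<rho>' \<le> rid (L' p) \<and> (\<rho>' = rid (L' p) \<longrightarrow> uph Ob' L' p \<and> r' = op_reg (curop (L' p)) \<and> OUpd p (opc (L' p)) tsv' \<in> Ob')"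
      proof (cases "p = i")
        case True
        thus ?thesis using gs_le[of \<rho>' r' tsv'] g m by (simp add: L'i)
      next
        case False
        thus ?thesis using o uph_other[OF False] by (auto simp: L'o Ob'_def)
      qed
    qed
    show "c_gsq L' G Ob'" unfolding c_gsq_def
    proof (intro allI impI)
      fix p \<rho>' r' bt' assume g: "GSQ p \<rho>' r' bt' \<in> G"
      note o = E(9)[unfolded c_gsq_def, rule_format, OF g]
      show "\<rho>' \<le> rid (L' p) \<and> (\<rho>' = rid (L' p) \<longrightarrow> qph Ob' L' p \<and> curop (L' p) = Rd r' \<and> rreg (L' p) = r' \<and> OEv (EInv p (opc (L' p)) (Rd r') bt') \<in> Ob')"
      proof (cases "p = i")
        case True
        thus ?thesis using gsq_le[of \<rho>' r' bt'] g m by (simp add: L'i)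
      next
        case False
        thus ?thesis using o qph_other[OF False] by (auto simp: L'o Ob'_def)
      qed
    qed
    show "c_acks L' G Ob'" unfolding c_acks_def
    proof (intro allI)
      fix p
      show "(\<not> uph Ob' L' p \<longrightarrow> acks (L' p) = {}) \<and>
        (\<forall>j\<in>acks (L' p). \<exists>a tsv. a < lt (L' p) \<and> OUpd p (opc (L' p)) tsv \<in> Ob' \<and> GU j a (op_reg (curop (L' p))) tsv \<in> G)"
      proof (cases "p = i")
        case True thus ?thesis by (simp add: L'i)
      next
        case False
        have o: "(\<not> uph Ob L p \<longrightarrow> acks (L p) = {}) \<and>
          (\<forall>j\<in>acks (L p). \<exists>a tsv. a < lt (L p) \<and> OUpd p (opc (L p)) tsv \<in> Ob \<and> GU j a (op_reg (curop (L p))) tsv \<in> G)"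
          using E(10) unfolding c_acks_def by blast
        show ?thesis unfolding uph_other[OF False] L'o[OF False]
        proof (intro conjI impI ballI)
          assume "\<not> uph Ob L p" thus "acks (L p) = {}" using o by blast
        next
          fix j' assume "j' \<in> acks (L p)"
          then obtain a tsv where "a < lt (L p)" "OUpd p (opc (L p)) tsv \<in> Ob" "GU j' a (op_reg (curop (L p))) tsv \<in> G"
            using o by blast
          thus "\<exists>a tsv. a < lt (L p) \<and> OUpd p (opc (L p)) tsv \<in> Ob' \<and> GU j' a (op_reg (curop (L p))) tsv \<in> G"
            unfolding Ob'_def by blast
        qed
      qed
    qed
    show "c_q L' G Ob'" unfolding c_q_def
    proof (intro allI)
      fix p
      show "(\<not> qph Ob' L' p \<longrightarrow> qresps (L' p) = {}) \<and> inj_on snd (qresps (L' p)) \<and>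
        (\<forall>v j. (v,j)\<in>qresps (L' p) \<longrightarrow> (\<exists>q r bt. GQ j q r v \<in> G \<and> curop (L' p) = Rd r \<and> OEv (EInv p (opc (L' p)) (Rd r) bt) \<in> Ob' \<and> bt < q))"
      proof (cases "p = i")
        case True thus ?thesis using q0 by (simp add: L'i)
      next
        case False
        have o: "(\<not> qph Ob L p \<longrightarrow> qresps (L p) = {}) \<and> inj_on snd (qresps (L p)) \<and>
          (\<forall>v j. (v,j)\<in>qresps (L p) \<longrightarrow> (\<exists>q r bt. GQ j q r v \<in> G \<and> curop (L p) = Rd r \<and> OEv (EInv p (opc (L p)) (Rd r) bt) \<in> Ob \<and> bt < q))"
          using E(11) unfolding c_q_def by blast
        show ?thesis unfolding qph_other[OF False] L'o[OF False]
        proof (intro conjI impI allI)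
          assume "\<not> qph Ob L p" thus "qresps (L p) = {}" using o by blast
        next
          show "inj_on snd (qresps (L p))" using o by blast
        next
          fix v' j' assume "(v', j') \<in> qresps (L p)"
          then obtain q' r' bt' where "GQ j' q' r' v' \<in> G" "curop (L p) = Rd r'" "OEv (EInv p (opc (L p)) (Rd r') bt') \<in> Ob" "bt' < q'"
            using o by blast
          thus "\<exists>q r bt. GQ j' q r v' \<in> G \<and> curop (L p) = Rd r \<and> OEv (EInv p (opc (L p)) (Rd r) bt) \<in> Ob' \<and> bt < q"
            unfolding Ob'_def by blast
        qed
      qed
    qed
    show "c_tok ?N' L'" unfolding c_tok_def
    proof (intro allI)
      fix i' j' \<rho>'
      have old: "tok ?N' L i' j' \<rho>' \<le> 1" using E0(12) unfolding c_tok_def by blast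
      show "tok ?N' L' i' j' \<rho>' \<le> 1"
        using old q0 unfolding tok_def by (cases "i' = i") (auto simp: L'i L'o)
    qed
    show "c_einv L' Ob'" unfolding c_einv_def
    proof (intro allI impI)
      fix p k op t assume "OEv (EInv p k op t) \<in> Ob'"
      hence "OEv (EInv p k op t) \<in> Ob" unfolding Ob'_def by simp
      note o = E(13)[unfolded c_einv_def, rule_format, OF this]
      show "0 < k \<and> k \<le> opc (L' p) \<and> (k = opc (L' p) \<longrightarrow> op = curop (L' p))"
        using o by (cases "p = i") (auto simp: L'i L'o)
    qed
    show "c_einvu Ob'" using E(14) unfolding c_einvu_def Ob'_def by simp
    show "c_eres L' Ob'" unfolding c_eres_def
    proof (intro allI impI)
      fix p k op res' t assume h: "OEv (ERes p k op res' t) \<in> Ob'"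
      show "k \<le> opc (L' p) \<and> (k = opc (L' p) \<longrightarrow> \<not> busy (L' p)) \<and> (\<exists>tsv. OUpd p k tsv \<in> Ob')"
      proof (cases "OEv (ERes p k op res' t) \<in> Ob")
        case True
        note o = E(15)[unfolded c_eres_def, rule_format, OF True]
        have "\<exists>tsv. OUpd p k tsv \<in> Ob'" using o unfolding Ob'_def by blast
        thus ?thesis using o by (cases "p = i") (auto simp: L'i L'o)
      next
        case False
        hence pk: "p = i" "k = opc (L i)" using h unfolding Ob'_def by auto
        have "OUpd p k tsv \<in> Ob'" using ui(3) pk unfolding Ob'_def by simp
        hence "\<exists>tsv. OUpd p k tsv \<in> Ob'" by blast
        moreover have "k \<le> opc (L' p)" "k = opc (L' p) \<longrightarrow> \<not> busy (L' p)" using pk by (simp_all add: L'i)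
        ultimately show ?thesis by blast
      qed
    qed
    show "c_oupd L' Ob'" unfolding c_oupd_def
    proof (intro allI impI)
      fix p k tsv' assume "OUpd p k tsv' \<in> Ob'"
      hence "OUpd p k tsv' \<in> Ob" unfolding Ob'_def by simp
      note o = E(16)[unfolded c_oupd_def, rule_format, OF this]
      show "k \<le> opc (L' p)" using o by (cases "p = i") (auto simp: L'i L'o)
    qed
    show "c_oupdu Ob'" using E(17) unfolding c_oupdu_def Ob'_def by simp
    show "c_i1 n G Ob'" unfolding c_i1_def
    proof (intro allI impI)
      fix p k op res' t tsv' assume h1: "OEv (ERes p k op res' t) \<in> Ob'" and h2: "OUpd p k tsv' \<in> Ob'"
      have e2: "OUpd p k tsv' \<in> Ob" using h2 unfolding Ob'_def by simp
      show "\<exists>A. A \<subseteq> {1..n} \<and> card A = maj n \<and> (\<forall>j\<in>A. \<exists>a<t. GU j a (op_reg op) tsv' \<in> G)"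
      proof (cases "OEv (ERes p k op res' t) \<in> Ob")
        case True
        from E(18)[unfolded c_i1_def, rule_format, OF True e2] show ?thesis .
      next
        case False
        hence pk: "p = i" "k = opc (L i)" "op = curop (L i)" "t = t'" using h1 unfolding Ob'_def by auto
        have "tsv' = tsv" using E(17)[unfolded c_oupdu_def, rule_format, OF e2[unfolded pk] ui(3)] .
        show ?thesis
        proof (intro exI[of _ ?A] conjI ballI)
          show "?A \<subseteq> {1..n}" by (rule Asub)
          show "card ?A = maj n" by (rule full)
        next
          fix x assume "x \<in> ?A"
          thus "\<exists>a<t. GU x a (op_reg op) tsv' \<in> G" using elA pk \<open>tsv' = tsv\<close> by blast
        qed
      qed
    qed
    show "c_i2 n G Ob'" using E(19) unfolding c_i2_def Ob'_def by simp
  qed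
qed

lemma step_inv:
  assumes I0: "Inv n s G Ob" and st: "step n f s x = Some (s', os)"
  shows "\<exists>G'. Inv n s' G' (Ob \<union> set os)"
proof -
  have I: "InvNL n (net s) (locals s) G Ob" using I0 unfolding Inv_def .
  show ?thesis
  proof (cases x)
    case (Invoke i op)
    have c: "i \<in> {1..n}" "\<not> busy (locals s i)" using st Invoke by (auto split: if_splits)
    have nc: "i \<notin> crashed s" using st Invoke by (auto split: if_splits)
    show ?thesis
    proof (cases op)
      case (Rd r)
      note L = inv_rd[OF I c, of r]
      show ?thesis using st Invoke Rd c nc L
        by (intro exI[of _ "insert (GSQ i (rid (locals s i) + 1) r (lt (locals s i) + 1)) G"])
           (auto simp: Inv_def Let_def)
    next
      case (Wr r v)
      note L = inv_wr[OF I c, of r v]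
      show ?thesis using st Invoke Wr c nc L
        by (intro exI[of _ "insert (GS i (rid (locals s i) + 1) r ((lt (locals s i) + 1, i), v)) G"])
           (auto simp: Inv_def Let_def insert_commute)
    qed
  next
    case (Deliver j i m)
    have y: "(j, i, m) \<in># net s" using st Deliver by (auto split: if_splits)
    have nc: "i \<notin> crashed s" using st Deliver by (auto split: if_splits)
    show ?thesis
    proof (cases m)
      case (Query bt \<rho> r)
      note L = inv_query[OF I y[unfolded Query]]
      show ?thesis using st Deliver Query y nc L
        by (intro exI[of _ "insert (GQ i (max (lt (locals s i)) bt + 1) r (tvps (locals s i) r)) G"])
           (auto simp: Inv_def Let_def)
    next
      case (Update at \<rho> r tsv)
      note L = inv_update[OF I y[unfolded Update]]
      show ?thesis using st Deliver Update y nc L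
        by (intro exI[of _ "insert (GU i (max (lt (locals s i)) at + 1) r tsv) G"])
           (auto simp: Inv_def Let_def)
    next
      case (Response q \<rho> v)
      show ?thesis
      proof (cases "rid (locals s i) = \<rho>")
        case False
        note L = inv_remove[OF I y[unfolded Response]]
        show ?thesis using st Deliver Response y False nc L
          by (intro exI[of _ G]) (auto simp: Inv_def Let_def)
      next
        case m: True
        show ?thesis
        proof (cases "card (qresps (locals s i) \<union> {(v,j)}) = maj n")
          case True
          note L = inv_resp_full[OF I y[unfolded Response] m True]
          show ?thesis using st Deliver Response y m True nc L
            by (intro exI[of _ "insert (GS i (rid (locals s i) + 1) (rreg (locals s i)) (Max (fst ` (qresps (locals s i) \<union> {(v,j)})))) G"])
               (auto simp: Inv_def Let_def)
        next
          case False
          note L = inv_resp_nf[OF I y[unfolded Response] m]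
          show ?thesis using st Deliver Response y m False nc L
            by (intro exI[of _ G]) (auto simp: Inv_def Let_def)
        qed
      qed
    next
      case (Ack at \<rho>)
      show ?thesis
      proof (cases "rid (locals s i) = \<rho>")
        case False
        note L = inv_remove[OF I y[unfolded Ack]]
        show ?thesis using st Deliver Ack y False nc L
          by (intro exI[of _ G]) (auto simp: Inv_def Let_def)
      next
        case m: True
        show ?thesis
        proof (cases "card (acks (locals s i) \<union> {j}) = maj n")
          case True
          note L = inv_ack_full[OF I y[unfolded Ack] m True]
          show ?thesis using st Deliver Ack y m True nc L
            by (intro exI[of _ G]) (auto simp: Inv_def Let_def)
        next
          case False
          note L = inv_ack_nf[OF I y[unfolded Ack] m]
          show ?thesis using st Deliver Ack y m False nc L
            by (intro exI[of _ G]) (auto simp: Inv_def Let_def)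
        qed
      qed
    qed
  next
    case (Crash i)
    show ?thesis using st Crash I0 by (intro exI[of _ G]) (auto simp: Inv_def split: if_splits)
  qed
qed

lemma execs_inv: "Inv n s G Ob \<Longrightarrow> execs n f s inps = Some (s', os) \<Longrightarrow> \<exists>G'. Inv n s' G' (Ob \<union> set os)"
proof (induction inps arbitrary: s G Ob os s')
  case Nil
  thus ?case by auto
next
  case (Cons x xs)
  obtain s1 os1 where st: "step n f s x = Some (s1, os1)"
    using Cons.prems(2) by (auto split: option.splits)
  obtain s2 os2 where ex: "execs n f s1 xs = Some (s2, os2)" and eq: "s' = s2" "os = os1 @ os2"
    using Cons.prems(2) st by (auto split: option.splits)
  obtain G1 where I1: "Inv n s1 G1 (Ob \<union> set os1)" using step_inv[OF Cons.prems(1) st] by blast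
  obtain G2 where "Inv n s2 G2 (Ob \<union> set os1 \<union> set os2)" using Cons.IH[OF I1 ex] by blast
  thus ?case using eq by (auto simp: Un_assoc)
qed

lemma reach: "execs n f ginit inps = Some (s, os) \<Longrightarrow> \<exists>G. Inv n s G (set os)"
  using execs_inv[OF Inv_init] by fastforce


lemma hist_mem: "e \<in> set (hist os) \<longleftrightarrow> OEv e \<in> set os"
  unfolding hist_def by (induction os) (auto split: obs.splits)

lemma card_inter:
  assumes "A \<subseteq> {1..n}" "R \<subseteq> {1..n}" "card A = maj n" "card R = maj n"
  shows "\<exists>j. j \<in> A \<and> j \<in> R"
proof (rule ccontr)
  assume "\<not> ?thesis"
  hence "A \<inter> R = {}" by auto
  moreover have "finite A" "finite R" using assms(1,2) finite_subset by blast+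
  ultimately have "card (A \<union> R) = card A + card R" by (simp add: card_Un_disjoint)
  moreover have "card (A \<union> R) \<le> n" using assms(1,2) card_mono[of "{1..n}" "A \<union> R"] by simp
  ultimately show False using assms(3,4) unfolding maj_def by linarith
qed

theorem proposition1:
  fixes n f :: nat and inps :: "input list" and s :: gstate and os :: "obs list"
    and x :: reg and o1 o2 :: "pid \<times> nat"
  assumes "2 * f < n"
    and "execs n f ginit inps = Some (s, os)"
    and "complete (hist os)"
    and "op_in (restr x (Hlt (hist os))) o1"
    and "op_in (restr x (Hlt (hist os))) o2"
    and "has_update_phase os o1"
    and "has_query_phase (hist os) o2"
    and "prec (restr x (Hlt (hist os))) o1 o2"
  shows "ts_of os o1 \<le> ts_of os o2"
proof -
  obtain G where I: "Inv n s G (set os)" using reach[OF assms(2)] by blast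
  define Gl where "Gl = restr x (Hlt (hist os))"
  obtain p1 k1 where o1: "o1 = (p1,k1)" by fastforce
  obtain p2 k2 where o2: "o2 = (p2,k2)" by fastforce
  obtain i j where ij: "i < j" "j < length Gl" "is_res_of (Gl ! i) o1" "is_inv_of (Gl ! j) o2"
    using assms(8) unfolding prec_def Gl_def by blast
  have srt: "sorted (map (\<lambda>e. (ev_lt e, ev_proc e)) Gl)"
    unfolding Gl_def restr_def Hlt_def by (rule sorted_filter) simp
  have key: "(ev_lt (Gl!i), ev_proc (Gl!i)) \<le> (ev_lt (Gl!j), ev_proc (Gl!j))"
    using sorted_nth_mono[OF srt, of i j] ij by simp
  have memG: "\<And>e. e \<in> set Gl \<Longrightarrow> OEv e \<in> set os \<and> ev_reg e = x"
    unfolding Gl_def restr_def Hlt_def by (auto simp: hist_mem)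
  obtain op1 res1 t1 where e1: "Gl ! i = ERes p1 k1 op1 res1 t1"
    using ij(3) o1 by (cases "Gl ! i") auto
  obtain op2 t2 where e2: "Gl ! j = EInv p2 k2 op2 t2"
    using ij(4) o2 by (cases "Gl ! j") auto
  have t12: "t1 \<le> t2" using key e1 e2 by (auto simp: less_eq_prod_def)
  have m1: "OEv (ERes p1 k1 op1 res1 t1) \<in> set os" "op_reg op1 = x"
    using memG[of "Gl!i"] ij e1 nth_mem[of i Gl] by (auto simp: ev_reg_def)
  have m2: "OEv (EInv p2 k2 op2 t2) \<in> set os" "op_reg op2 = x"
    using memG[of "Gl!j"] ij e2 nth_mem[of j Gl] by (auto simp: ev_reg_def)
  obtain e r where e: "e \<in> set (hist os)" "is_inv_of e o2" "ev_opkind e = Rd r"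
    using assms(7) unfolding has_query_phase_def by blast
  obtain t2' where e': "OEv (EInv p2 k2 (Rd r) t2') \<in> set os"
  proof -
    have "OEv e \<in> set os" using e(1) by (simp add: hist_mem)
    thus ?thesis using e(2,3) o2 that by (cases e rule: event.exhaust) auto
  qed
  have uinv: "\<forall>i k op t op' t'. OEv (EInv i k op t) \<in> set os \<longrightarrow> OEv (EInv i k op' t') \<in> set os \<longrightarrow> op = op' \<and> t = t'"
    using I unfolding Inv_def InvNL_def c_einvu_def c_eres_def c_oupdu_def c_i1_def c_i2_def c_guq_def by (elim conjE) assumption
  have cres: "\<forall>i k op res t. OEv (ERes i k op res t) \<in> set os \<longrightarrow> k \<le> opc (locals s i) \<and> (k = opc (locals s i) \<longrightarrow> \<not> busy (locals s i)) \<and> (\<exists>tsv. OUpd i k tsv \<in> set os)"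
    using I unfolding Inv_def InvNL_def c_einvu_def c_eres_def c_oupdu_def c_i1_def c_i2_def c_guq_def by (elim conjE) assumption
  have uupd: "\<forall>i k tsv tsv'. OUpd i k tsv \<in> set os \<longrightarrow> OUpd i k tsv' \<in> set os \<longrightarrow> tsv = tsv'"
    using I unfolding Inv_def InvNL_def c_einvu_def c_eres_def c_oupdu_def c_i1_def c_i2_def c_guq_def by (elim conjE) assumption
  have cI1: "\<forall>i k op res t tsv. OEv (ERes i k op res t) \<in> set os \<longrightarrow> OUpd i k tsv \<in> set os \<longrightarrow>
        (\<exists>A. A \<subseteq> {1..n} \<and> card A = maj n \<and> (\<forall>j\<in>A. \<exists>a<t. GU j a (op_reg op) tsv \<in> G))"
    using I unfolding Inv_def InvNL_def c_einvu_def c_eres_def c_oupdu_def c_i1_def c_i2_def c_guq_def by (elim conjE) assumption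
  have cI2: "\<forall>i k r bt tsv. OEv (EInv i k (Rd r) bt) \<in> set os \<longrightarrow> OUpd i k tsv \<in> set os \<longrightarrow>
        (\<exists>R. R \<subseteq> {1..n} \<and> card R = maj n \<and> (\<forall>j\<in>R. \<exists>q v. bt < q \<and> GQ j q r v \<in> G \<and> v \<le> tsv))"
    using I unfolding Inv_def InvNL_def c_einvu_def c_eres_def c_oupdu_def c_i1_def c_i2_def c_guq_def by (elim conjE) assumption
  have cUQ: "\<forall>p a r tsv q v. GU p a r tsv \<in> G \<longrightarrow> GQ p q r v \<in> G \<longrightarrow> a < q \<longrightarrow> tsv \<le> v"
    using I unfolding Inv_def InvNL_def c_einvu_def c_eres_def c_oupdu_def c_i1_def c_i2_def c_guq_def by (elim conjE) assumption
  have "op2 = Rd r \<and> t2 = t2'" using uinv m2(1) e' by blast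
  hence "op2 = Rd r" "t2 = t2'" by auto
  hence rx: "r = x" using m2 by simp
  obtain tsv1 where u1: "OUpd p1 k1 tsv1 \<in> set os"
    using assms(6) o1 unfolding has_update_phase_def by auto
  have "\<exists>e'\<in>set (hist os). is_res_of e' o2"
    using assms(3) m2(1) o2 unfolding complete_def by (auto simp: hist_mem)
  then obtain op2' res2 t2'' where "OEv (ERes p2 k2 op2' res2 t2'') \<in> set os"
  proof -
    from \<open>\<exists>e'\<in>set (hist os). is_res_of e' o2\<close> obtain e' where "e' \<in> set (hist os)" "is_res_of e' o2" by blast
    moreover have "OEv e' \<in> set os" using \<open>e' \<in> set (hist os)\<close> by (simp add: hist_mem)
    ultimately show ?thesis using that o2 by (cases e' rule: event.exhaust) auto
  qed
  then obtain tsv2 where u2: "OUpd p2 k2 tsv2 \<in> set os"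
    using cres by blast
  have ts1: "ts_of os o1 = fst tsv1"
  proof -
    have "(THE tsv. OUpd p1 k1 tsv \<in> set os) = tsv1"
      by (rule the_equality) (use u1 uupd in blast)+
    thus ?thesis unfolding ts_of_def o1 by simp
  qed
  have ts2: "ts_of os o2 = fst tsv2"
  proof -
    have "(THE tsv. OUpd p2 k2 tsv \<in> set os) = tsv2"
      by (rule the_equality) (use u2 uupd in blast)+
    thus ?thesis unfolding ts_of_def o2 by simp
  qed
  obtain A where A: "A \<subseteq> {1..n}" "card A = maj n" "\<forall>j\<in>A. \<exists>a<t1. GU j a x tsv1 \<in> G"
    using cI1[rule_format, OF m1(1) u1] m1(2) by auto
  obtain R where R: "R \<subseteq> {1..n}" "card R = maj n" "\<forall>j\<in>R. \<exists>q v. t2 < q \<and> GQ j q x v \<in> G \<and> v \<le> tsv2"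
    using cI2[rule_format, of p2 k2 r t2 tsv2] m2(1) u2 \<open>op2 = Rd r\<close> rx by auto
  obtain p where p: "p \<in> A" "p \<in> R" using card_inter[OF A(1) R(1) A(2) R(2)] by blast
  obtain a where a: "a < t1" "GU p a x tsv1 \<in> G" using A(3) p by blast
  obtain q v where qv: "t2 < q" "GQ p q x v \<in> G" "v \<le> tsv2" using R(3) p by blast
  have "a < q" using a qv t12 by linarith
  hence "tsv1 \<le> v" using cUQ[rule_format, OF a(2) qv(2)] by blast
  hence "tsv1 \<le> tsv2" using qv by simp
  hence "fst tsv1 < fst tsv2 \<or> fst tsv1 \<le> fst tsv2" by (simp only: less_eq_prod_def) blast
  thus ?thesis unfolding ts1 ts2 by (auto dest: less_imp_le)
qed

end
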